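(* Let $F\in\mathcal M$ be in almost quiver form with $\alpha$ active and $\beta$ inactive indices. (i) If $F$ is of type $UP$ with extra factor $(q^2;q^2)_k$, then $\tilde T^2F$ can be written in almost quiver form of type $UP$ with extra factor $(q^2;q^2)_k$, with $\alpha+\beta$ active and $\beta$ inactive indices. (ii) If $F$ is of type $OP$ with extra factor $(q^2;q^2)_k$, then $\tilde T^2F$ can be written in almost quiver form of type $OP$ with extra factor $(q^2;q^2)_k$, with $\alpha+\beta$ active and $\beta$ inactive indices. (iii) If $F$ is of type $OP$ with extra factor $(q^2;q^2)_{j-k}$, then $\tilde R^2F$ can be written in almost quiver form of type $OP$ with extra factor $(q^2;q^2)_{j-k}$, with $\alpha$ active and $\alpha+\beta$ inactive indices. (iv) If $F$ is of type $RI$ with extra factor $(q^2;q^2)_{j-k}$, then $\tilde R^2F$ can be written in almost quiver form of type $RI$ with extra factor $(q^2;q^2)_{j-k}$, with $\alpha$ active and $\alpha+\beta$ inactive indices.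
   Context: Notation: $(x;q^2)_n=\prod_{i=0}^{n-1}(1-xq^{2i})$; ${N\brack b_1,\dots,b_m}=\frac{(q^2;q^2)_N}{\prod(q^2;q^2)_{b_i}}$ for $\sum b_i=N$; ${N\brack k}_+={N\brack k,N-k}$. Formal skein setup: linearly independent symbols $X[j,k]$, $X\in\{UP,OP,RI\}$, $0\le k\le j$; $\mathcal M$ = formal sums $\sum_{j\ge0}\sum_X\sum_{k=0}^jc_{X,j,k}X[j,k]$, $c\in\mathbb{Q}(a,q)$. Twist operators (for fixed $j$, extended termwise): $T\,UP[j,k]=\sum_{h=k}^j(-q)^{h-j}q^{k^2}{h\brack k}_+UP[j,h]$; $R\,UP[j,k]=\sum_{h=0}^k(-q)^{h-j}a^{h-j}q^{-2kh+k^2+j^2}{j-h\brack k-h}_+OP[j,h]$; $T\,OP[j,k]=\sum_{h=k}^j(-q)^ha^kq^{k^2-2jk}{h\brack k}_+RI[j,h]$; $R\,OP[j,k]=\sum_{h=0}^k(-q)^{h-j}a^{k-j}q^{2h(j-k)+(k-j)^2}{j-h\brack k-h}_+UP[j,h]$; $T\,RI[j,k]=\sum_{h=k}^j(-q)^ha^hq^{k^2-2jh}{h\brack k}_+OP[j,h]$; $R\,RI[j,k]=\sum_{h=0}^k(-q)^hq^{h(2j-2k)+k^2-j^2}{j-h\brack k-h}_+RI[j,h]$. Rescaling $\rho(X[j,k])={j\brack k}_+X[j,k]$; $\tilde T=\rho T\rho^{-1}$, $\tilde R=\rho R\rho^{-1}$. Almost quiver form: an element of $\mathcal M$ of the form $$\sum_{\mathbf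 d\in\mathbb{N}^{m+n}}(-q)^{S\cdot\mathbf d}a^{A\cdot\mathbf d}q^{\mathbf d^TQ\mathbf d}(q^2;q^2)_{K\cdot\mathbf d}{|\mathbf d|\brack d_1,\dots,d_{m+n}}X[\,|\mathbf d|,\,d_1+\cdots+d_m\,]$$ with $S,A\in\mathbb{Z}^{m+n}$, $Q$ a symmetric integer matrix, $K\in\{0,1\}^{m+n}$, $|\mathbf d|=\sum d_i$, and a fixed type $X$; $d_1,\dots,d_m$ are the active indices ($m=\alpha$ of them), the rest inactive ($n=\beta$). Writing $j=|\mathbf d|$ and $k=d_1+\dots+d_m$, it has "extra factor $(q^2;q^2)_k$" if $K$ is $1$ exactly on the active indices, and "extra factor $(q^2;q^2)_{j-k}$" if $K$ is $1$ exactly on the inactive indices. "Can be written" means equality in $\mathcal M$ with such an expression (with new data). *)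

theory Defs
  imports "HOL-Computational_Algebra.Polynomial" "HOL-Computational_Algebra.Fraction_Field"
begin

text \<open>Coefficient field Q(a,q), realised as the fraction field of Q[a][q]
  (outer polynomial variable = q, inner polynomial variable = a).\<close>
type_synonym coef = "rat poly poly fract"

definition qv :: coef where "qv = Fract [:0, 1:] 1"
definition av :: coef where "av = Fract [:[:0, 1:]:] 1"

definition qpp :: "nat \<Rightarrow> coef" where
  "qpp n = (\<Prod>i<n. 1 - qv^2 * qv^(2*i))"

definition qbin :: "nat \<Rightarrow> nat \<Rightarrow> coef" where
  "qbin N k = qpp N / (qpp k * qpp (N - k))"

definition qmultinom :: "nat \<Rightarrow> (nat \<Rightarrow> nat) \<Rightarrow> coef" where
  "qmultinom r d = qpp (\<Sum>i<r. d i) / (\<Prod>i<r. qpp (d i))"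

datatype skein = UP | OP | RI

text \<open>Elements of M: the coefficient c X j k of X[j,k] (only k \<le> j is meaningful).\<close>
type_synonym melt = "skein \<Rightarrow> nat \<Rightarrow> nat \<Rightarrow> coef"

definition Top :: "melt \<Rightarrow> melt" where
  "Top F Y j h = (if h \<le> j then
     (case Y of
        UP \<Rightarrow> (\<Sum>k\<le>h. F UP j k * ((- qv) powi (int h - int j) * qv powi (int k ^ 2) * qbin h k))
      | RI \<Rightarrow> (\<Sum>k\<le>h. F OP j k * ((- qv) powi (int h) * av powi (int k)
                 * qv powi (int k ^ 2 - 2 * int j * int k) * qbin h k))
      | OP \<Rightarrow> (\<Sum>k\<le>h. F RI j k * ((- qv) powi (int h) * av powi (int h)
                 * qv powi (int k ^ 2 - 2 * int j * int h) * qbin h k)))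
   else 0)"

definition Rop :: "melt \<Rightarrow> melt" where
  "Rop F Y j h = (if h \<le> j then
     (case Y of
        OP \<Rightarrow> (\<Sum>k\<in>{h..j}. F UP j k * ((- qv) powi (int h - int j) * av powi (int h - int j)
                 * qv powi (- 2 * int k * int h + int k ^ 2 + int j ^ 2) * qbin (j - h) (k - h)))
      | UP \<Rightarrow> (\<Sum>k\<in>{h..j}. F OP j k * ((- qv) powi (int h - int j) * av powi (int k - int j)
                 * qv powi (2 * int h * (int j - int k) + (int k - int j) ^ 2) * qbin (j - h) (k - h)))
      | RI \<Rightarrow> (\<Sum>k\<in>{h..j}. F RI j k * ((- qv) powi (int h)
                 * qv powi (int h * (2 * int j - 2 * int k) + int k ^ 2 - int j ^ 2) * qbin (j - h) (k - h))))
   else 0)"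

definition rho :: "melt \<Rightarrow> melt" where
  "rho F X j k = qbin j k * F X j k"
definition rho_inv :: "melt \<Rightarrow> melt" where
  "rho_inv F X j k = F X j k / qbin j k"

definition Ttil :: "melt \<Rightarrow> melt" where "Ttil F = rho (Top (rho_inv F))"
definition Rtil :: "melt \<Rightarrow> melt" where "Rtil F = rho (Rop (rho_inv F))"

text \<open>Almost quiver form of type X with m active indices (0..m-1) and n inactive indices
  (m..m+n-1); S, A, Q, K only matter on indices < m+n; K i true means K_i = 1.\<close>
definition aqf :: "skein \<Rightarrow> nat \<Rightarrow> nat \<Rightarrow> (nat \<Rightarrow> int) \<Rightarrow> (nat \<Rightarrow> int)
    \<Rightarrow> (nat \<Rightarrow> nat \<Rightarrow> int) \<Rightarrow> (nat \<Rightarrow> bool) \<Rightarrow> melt" where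
  "aqf X m n S A Q K Y j k = (if Y = X then
     (\<Sum>d\<in>{d. (\<forall>i\<ge>m+n. d i = 0) \<and> (\<Sum>i<m+n. d i) = j \<and> (\<Sum>i<m. d i) = k}.
        (- qv) powi (\<Sum>i<m+n. S i * int (d i))
        * av powi (\<Sum>i<m+n. A i * int (d i))
        * qv powi (\<Sum>i<m+n. \<Sum>l<m+n. int (d i) * Q i l * int (d l))
        * qpp (\<Sum>i<m+n. if K i then d i else 0)
        * qmultinom (m+n) d)
   else 0)"

definition symQ :: "nat \<Rightarrow> (nat \<Rightarrow> nat \<Rightarrow> int) \<Rightarrow> bool" where
  "symQ N Q \<longleftrightarrow> (\<forall>i<N. \<forall>l<N. Q i l = Q l i)"

text \<open>Extra factor (q^2;q^2)_k: K is 1 exactly on the active indices.\<close>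
definition extra_k :: "nat \<Rightarrow> nat \<Rightarrow> (nat \<Rightarrow> bool) \<Rightarrow> bool" where
  "extra_k m n K \<longleftrightarrow> (\<forall>i<m+n. K i \<longleftrightarrow> i < m)"
text \<open>Extra factor (q^2;q^2)_(j-k): K is 1 exactly on the inactive indices.\<close>
definition extra_jk :: "nat \<Rightarrow> nat \<Rightarrow> (nat \<Rightarrow> bool) \<Rightarrow> bool" where
  "extra_jk m n K \<longleftrightarrow> (\<forall>i<m+n. K i \<longleftrightarrow> m \<le> i)"

end

theory Submission
  imports Defs
begin


lemma qv_pow: "qv ^ n = Fract (([:0,1:] :: rat poly poly) ^ n) 1"
  unfolding qv_def by (induct n) (simp_all add: One_fract_def)

lemma qv_pow_ne1: "n > 0 \<Longrightarrow> qv ^ n \<noteq> 1"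
proof
  assume n: "n > 0" and h: "qv ^ n = 1"
  have "Fract (([:0,1:] :: rat poly poly) ^ n) 1 = Fract 1 1" using h unfolding qv_pow One_fract_def .
  then have "([:0,1:] :: rat poly poly) ^ n = 1" by (simp add: eq_fract)
  then have "degree (([:0,1:] :: rat poly poly) ^ n) = 0" by simp
  then show False using n by (simp add: degree_power_eq)
qed

lemma qv_nz[simp]: "qv \<noteq> 0" unfolding qv_def by (simp add: Zero_fract_def eq_fract)
lemma av_nz[simp]: "av \<noteq> 0" unfolding av_def by (simp add: Zero_fract_def eq_fract)

lemma qpp_nz[simp]: "qpp n \<noteq> 0"
proof -
  have "\<forall>i\<in>{..<n}. 1 - qv\<^sup>2 * qv ^ (2 * i) \<noteq> 0"
  proof
    fix i assume "i \<in> {..<n}"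
    have "qv^2 * qv^(2*i) = qv ^ (2 + 2*i)" by (simp add: power_add power2_eq_square)
    moreover have "qv ^ (2+2*i) \<noteq> 1" by (rule qv_pow_ne1) simp
    ultimately show "1 - qv\<^sup>2 * qv ^ (2 * i) \<noteq> 0" by simp
  qed
  then show ?thesis unfolding qpp_def by simp
qed

lemma qpp_0[simp]: "qpp 0 = 1" by (simp add: qpp_def)
lemma qpp_Suc: "qpp (Suc n) = qpp n * (1 - qv^(2*Suc n))"
  by (simp add: qpp_def power_add power2_eq_square mult.assoc)

lemma qbin_eq: "k \<le> n \<Longrightarrow> qbin n k = qpp n / (qpp k * qpp (n-k))" by (simp add: qbin_def)

definition gb :: "nat \<Rightarrow> nat \<Rightarrow> coef" where "gb n k = (if k \<le> n then qbin n k else 0)"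

lemma gb_0[simp]: "gb n 0 = 1" by (simp add: gb_def qbin_def)
lemma gb_diag[simp]: "gb n n = 1" by (simp add: gb_def qbin_def)
lemma gb_gt[simp]: "n < k \<Longrightarrow> gb n k = 0" by (simp add: gb_def)
lemma gb_le: "k \<le> n \<Longrightarrow> gb n k = qbin n k" by (simp add: gb_def)

lemma pascal_alg:
  fixes X a b A B :: coef
  assumes "a \<noteq> 0" "b \<noteq> 0" "1 - A \<noteq> 0" "1 - B \<noteq> 0"
  shows "X * (1 - A * B) / (a * (1 - B) * (b * (1 - A))) = A * (X / (a * (b * (1 - A)))) + X / (a * (1 - B) * b)"
proof -
  define u v where "u = 1 - A" and "v = 1 - B"
  have A: "A = 1 - u" and B: "B = 1 - v" by (simp_all add: u_def v_def)
  have "u \<noteq> 0" "v \<noteq> 0" using assms by (simp_all add: u_def v_def)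
  then show ?thesis unfolding A B using assms(1,2) by (simp add: field_simps)
qed

lemma gb_pascal: "gb (Suc n) (Suc k) = qv^(2*(n-k)) * gb n k + gb n (Suc k)"
proof (cases "k < n")
  case True
  have e: "Suc n - Suc k = n - k" "n - k = Suc (n - Suc k)" using True by auto
  have p1: "qpp (Suc n) = qpp n * (1 - qv^(2*(n-k)) * qv^(2*Suc k))"
  proof -
    have "2 * Suc n = 2*(n-k) + 2 * Suc k" using True by simp
    then show ?thesis unfolding qpp_Suc power_add[symmetric] by metis
  qed
  have p2: "qpp (n - k) = qpp (n - Suc k) * (1 - qv^(2*(n-k)))"
    by (subst (1) e(2), subst qpp_Suc, simp add: e(2)[symmetric])
  have p3: "qpp (Suc k) = qpp k * (1 - qv^(2*Suc k))" by (rule qpp_Suc)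
  have "gb (Suc n) (Suc k) = qpp (Suc n) / (qpp (Suc k) * qpp (n - k))"
    using True by (simp add: gb_def qbin_eq e(1))
  also have "\<dots> = qv^(2*(n-k)) * (qpp n / (qpp k * (qpp (n - Suc k) * (1 - qv^(2*(n-k))))))
      + qpp n / (qpp k * (1 - qv^(2*Suc k)) * qpp (n - Suc k))"
    unfolding p1 p2 p3 apply (rule pascal_alg)
    using qv_pow_ne1[of "2*(n-k)"] qv_pow_ne1[of "2*Suc k"] True by auto
  also have "\<dots> = qv^(2*(n-k)) * gb n k + gb n (Suc k)"
    using True by (simp add: gb_def qbin_eq p2 p3)
  finally show ?thesis .
next
  case False
  then show ?thesis by (cases "k = n") (auto simp: gb_def)
qed

lemma qbin_sym: "k \<le> n \<Longrightarrow> qbin n (n-k) = qbin n k" by (simp add: qbin_eq mult.commute)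

lemma qbin_a: "k \<le> h \<Longrightarrow> h \<le> j \<Longrightarrow> qbin j h * qbin h k / qbin j k = qbin (j-k) (h-k)"
proof -
  assume a: "k \<le> h" "h \<le> j"
  have "j - k - (h - k) = j - h" using a by simp
  then show ?thesis using a by (simp add: qbin_eq)
qed

lemma qbin_b: "h \<le> k \<Longrightarrow> k \<le> j \<Longrightarrow> qbin j h * qbin (j-h) (k-h) / qbin j k = qbin k h"
proof -
  assume a: "h \<le> k" "k \<le> j"
  have "j - h - (k - h) = j - k" using a by simp
  then show ?thesis using a by (simp add: qbin_eq)
qed

lemma qbin_c: "k \<le> h \<Longrightarrow> h \<le> l \<Longrightarrow> l \<le> j \<Longrightarrow>
  qbin (j-k) (h-k) * qbin (j-h) (l-h) = qbin (j-k) (l-k) * qbin (l-k) (h-k)"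
proof -
  assume a: "k \<le> h" "h \<le> l" "l \<le> j"
  have "j - k - (h - k) = j - h" "j - h - (l - h) = j - l" "j - k - (l - k) = j - l" "l - k - (h - k) = l - h"
    using a by auto
  then show ?thesis using a by (simp add: qbin_eq)
qed

lemma qbin_d: "l \<le> h \<Longrightarrow> h \<le> k \<Longrightarrow>
  qbin k h * qbin h l = qbin k l * qbin (k-l) (h-l)"
proof -
  assume a: "l \<le> h" "h \<le> k"
  have "k - l - (h - l) = k - h" using a by auto
  then show ?thesis using a by (simp add: qbin_eq)
qed




lemma qbinthm: "(\<Sum>u\<le>N. (-1)^u * qv^(u*u) * z^u * gb N u) = (\<Prod>i<N. 1 - z*qv^(2*i+1))"
proof (induct N)
  case 0 show ?case by simp
next
  case (Suc N)
  define P where "P = (\<lambda>u::nat. (-1)^u * qv^(u*u) * z^u)"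
  have IH: "(\<Sum>u\<le>N. P u * gb N u) = (\<Prod>i<N. 1 - z*qv^(2*i+1))" using Suc by (simp add: P_def)
  have A: "(\<Sum>u\<le>Suc N. P u * gb (Suc N) u) = P 0 * gb (Suc N) 0 + (\<Sum>u\<le>N. P (Suc u) * gb (Suc N) (Suc u))"
    by (rule sum.atMost_Suc_shift)
  have B: "(\<Sum>u\<le>N. P (Suc u) * gb (Suc N) (Suc u)) = (\<Sum>u\<le>N. P (Suc u) * qv^(2*(N-u)) * gb N u) + (\<Sum>u\<le>N. P (Suc u) * gb N (Suc u))"
    by (simp add: gb_pascal sum.distrib algebra_simps)
  have C: "P 0 * gb (Suc N) 0 + (\<Sum>u\<le>N. P (Suc u) * gb N (Suc u)) = (\<Sum>u\<le>Suc N. P u * gb N u)"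
    by (subst sum.atMost_Suc_shift) simp
  have D: "(\<Sum>u\<le>Suc N. P u * gb N u) = (\<Sum>u\<le>N. P u * gb N u)" by simp
  have E: "(\<Sum>u\<le>N. P (Suc u) * qv^(2*(N-u)) * gb N u) = - z * qv^(2*N+1) * (\<Sum>u\<le>N. P u * gb N u)"
    unfolding sum_distrib_left
  proof (rule sum.cong[OF refl])
    fix u assume "u \<in> {..N}"
    then obtain r where N: "N = u + r" by (metis atMost_iff le_Suc_ex)
    have "qv^(Suc u * Suc u) * qv^(2*(N-u)) = qv^(2*N+1) * qv^(u*u)"
      unfolding power_add[symmetric] N by (simp add: algebra_simps)
    then show "P (Suc u) * qv^(2*(N-u)) * gb N u = - z * qv^(2*N+1) * (P u * gb N u)"
      unfolding P_def by (simp add: algebra_simps power_mult)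
  qed
  have "(\<Sum>u\<le>Suc N. P u * gb (Suc N) u) = (\<Prod>i<N. 1 - z*qv^(2*i+1)) * (1 - z * qv^(2*N+1))"
  proof -
    have "(\<Sum>u\<le>Suc N. P u * gb (Suc N) u) = (P 0 * gb (Suc N) 0 + (\<Sum>u\<le>N. P (Suc u) * gb N (Suc u)))
       + (\<Sum>u\<le>N. P (Suc u) * qv^(2*(N-u)) * gb N u)" unfolding A B by (simp add: algebra_simps)
    also have "\<dots> = (\<Prod>i<N. 1 - z*qv^(2*i+1)) + - z * qv^(2*N+1) * (\<Prod>i<N. 1 - z*qv^(2*i+1))"
      unfolding C D E IH ..
    finally show ?thesis by (simp add: algebra_simps)
  qed
  then show ?case by (simp add: P_def)
qed

lemma qpp_shift: "qpp (e+N) = qpp e * (\<Prod>i<N. 1 - qv^(1+2*e) * qv^(2*i+1))"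
proof (induct N)
  case (Suc N)
  have "qv^(1+2*e) * qv^(2*N+1) = qv^(2*Suc (e+N))" unfolding power_add[symmetric] by simp
  then show ?case using Suc by (simp add: qpp_Suc)
qed simp

lemma kersum: "(\<Sum>u\<le>N. (-qv)^u * qv^(2*u*e + u*u) * gb N u) = qpp (e+N) / qpp e"
proof -
  have "(\<Sum>u\<le>N. (-qv)^u * qv^(2*u*e + u*u) * gb N u) = (\<Sum>u\<le>N. (-1)^u * qv^(u*u) * (qv^(1+2*e))^u * gb N u)"
  proof (rule sum.cong[OF refl])
    fix u
    have 1: "(-qv)^u = (-1)^u * qv^u" by (rule power_minus)
    have ex: "u + (2*u*e + u*u) = u*u + (1+2*e)*u" by (simp add: algebra_simps)
    have 2: "qv^u * qv^(2*u*e + u*u) = qv^(u*u) * (qv^(1+2*e))^u"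
      unfolding power_mult[symmetric] power_add[symmetric] ex ..
    show "(-qv)^u * qv^(2*u*e + u*u) * gb N u = (-1)^u * qv^(u*u) * (qv^(1+2*e))^u * gb N u"
    proof -
      have "(-qv)^u * qv^(2*u*e + u*u) * gb N u = (-1)^u * (qv^u * qv^(2*u*e + u*u)) * gb N u"
        unfolding 1 by (simp only: mult.assoc)
      also have "\<dots> = (-1)^u * (qv^(u*u) * (qv^(1+2*e))^u) * gb N u" unfolding 2 ..
      finally show ?thesis by (simp only: mult.assoc)
    qed
  qed
  also have "\<dots> = qpp (e+N) / qpp e" unfolding qbinthm qpp_shift by simp
  finally show ?thesis .
qed

lemma vand2: "(\<Sum>s\<le>r. gb c s * qv^(2*(s*(a-(r-s)))) * gb a (r-s)) = gb (a+c) r"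
proof (induct c arbitrary: r)
  case 0
  show ?case by (subst sum.atMost_shift) simp
next
  case (Suc c)
  define X where "X = (\<lambda>r s. qv^(2*(s*(a-(r-s)))) * gb a (r-s))"
  have IH: "\<And>r. (\<Sum>s\<le>r. gb c s * X r s) = gb (a+c) r" using Suc by (simp add: X_def mult.assoc)
  show ?case
  proof (cases r)
    case 0 then show ?thesis by simp
  next
    case (Suc r')
    have A: "(\<Sum>s\<le>r. gb (Suc c) s * X r s) = X r 0 + (\<Sum>t<r. gb (Suc c) (Suc t) * X r (Suc t))"
      by (subst sum.atMost_shift) simp
    have B: "(\<Sum>t<r. gb (Suc c) (Suc t) * X r (Suc t)) = (\<Sum>t<r. qv^(2*(c-t)) * gb c t * X r (Suc t)) + (\<Sum>t<r. gb c (Suc t) * X r (Suc t))"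
      by (simp add: gb_pascal sum.distrib algebra_simps)
    have C: "X r 0 + (\<Sum>t<r. gb c (Suc t) * X r (Suc t)) = gb (a+c) r"
      using IH[of r] by (subst (asm) sum.atMost_shift) simp
    have D: "(\<Sum>t<r. qv^(2*(c-t)) * gb c t * X r (Suc t)) = qv^(2*(a+c-r')) * gb (a+c) r'"
      unfolding IH[of r', symmetric] sum_distrib_left Suc lessThan_Suc_atMost
    proof (rule sum.cong[OF refl])
      fix t assume t: "t \<in> {..r'}"
      show "qv^(2*(c-t)) * gb c t * X (Suc r') (Suc t) = qv^(2*(a+c-r')) * (gb c t * X r' t)"
      proof (cases "t \<le> c \<and> r' - t \<le> a")
        case True
        obtain c1 where c: "c = t + c1" using True le_Suc_ex by blast
        obtain w where w: "r' = t + w" using t le_Suc_ex by auto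
        obtain a1 where a: "a = w + a1" using True w le_Suc_ex by auto
        have "qv^(2*(c-t)) * qv^(2*(Suc t*(a-(Suc r'-Suc t)))) = qv^(2*(a+c-r')) * qv^(2*(t*(a-(r'-t))))"
          unfolding power_add[symmetric] c w a by (simp add: algebra_simps)
        then show ?thesis unfolding X_def by (simp add: algebra_simps)
      next
        case False
        then show ?thesis unfolding X_def by (auto simp: not_le)
      qed
    qed
    have "(\<Sum>s\<le>r. gb (Suc c) s * X r s) = qv^(2*(a+c-r')) * gb (a+c) r' + gb (a+c) r"
      unfolding A B D C[symmetric] by simp
    also have "\<dots> = gb (Suc (a+c)) r" unfolding Suc gb_pascal by simp
    finally show ?thesis by (simp add: X_def mult.assoc)
  qed
qed




definition qmon :: "int \<Rightarrow> int \<Rightarrow> int \<Rightarrow> coef" where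
  "qmon x y z = (- qv) powi x * av powi y * qv powi z"

lemma qmon_mult: "qmon a b c * qmon a' b' c' = qmon (a+a') (b+b') (c+c')"
  unfolding qmon_def by (simp add: power_int_add)

lemma qmon_nat: "qmon (int u) 0 (int n) = (-qv)^u * qv^n"
  unfolding qmon_def by simp

lemma qmon_0[simp]: "qmon 0 0 0 = 1" unfolding qmon_def by simp

lemma qmon_nz[simp]: "qmon a b c \<noteq> 0" unfolding qmon_def by simp

lemma qbin_nz[simp]: "qbin n k \<noteq> 0" unfolding qbin_def by simp

lemma sum_swap_cond:
  assumes "finite A" "finite B"
  shows "(\<Sum>x\<in>A. \<Sum>y\<in>{y\<in>B. P x y}. f x y) = (\<Sum>y\<in>B. \<Sum>x\<in>{x\<in>A. P x y}. f x y)"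
proof -
  have "(\<Sum>x\<in>A. \<Sum>y\<in>{y\<in>B. P x y}. f x y) = (\<Sum>x\<in>A. \<Sum>y\<in>B. if P x y then f x y else 0)"
    using assms by (simp add: sum.inter_filter)
  also have "\<dots> = (\<Sum>y\<in>B. \<Sum>x\<in>A. if P x y then f x y else 0)" by (rule sum.swap)
  also have "\<dots> = (\<Sum>y\<in>B. \<Sum>x\<in>{x\<in>A. P x y}. f x y)"
    using assms by (simp add: sum.inter_filter)
  finally show ?thesis .
qed

lemma swapT: "(\<Sum>h\<le>(l::nat). \<Sum>k\<le>h. g k h) = (\<Sum>k\<le>l. \<Sum>h\<in>{k..l}. g k h)"
proof -
  have "(\<Sum>h\<le>l. \<Sum>k\<le>h. g k h) = (\<Sum>h\<in>{..l}. \<Sum>k\<in>{k\<in>{..l}. k \<le> h}. g k h)"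
    by (intro sum.cong refl) (auto intro: order.trans)
  also have "\<dots> = (\<Sum>k\<in>{..l}. \<Sum>h\<in>{h\<in>{..l}. k \<le> h}. g k h)"
    by (rule sum_swap_cond) auto
  also have "\<dots> = (\<Sum>k\<le>l. \<Sum>h\<in>{k..l}. g k h)"
    by (intro sum.cong refl) (auto intro: order.trans)
  finally show ?thesis .
qed

lemma swapR: "(\<Sum>h\<in>{(l::nat)..j}. \<Sum>k\<in>{h..j}. g k h) = (\<Sum>k\<in>{l..j}. \<Sum>h\<in>{l..k}. g k h)"
proof -
  have "(\<Sum>h\<in>{l..j}. \<Sum>k\<in>{h..j}. g k h) = (\<Sum>h\<in>{l..j}. \<Sum>k\<in>{k\<in>{l..j}. h \<le> k}. g k h)"
    by (intro sum.cong refl) (auto intro: order.trans)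
  also have "\<dots> = (\<Sum>k\<in>{l..j}. \<Sum>h\<in>{h\<in>{l..j}. h \<le> k}. g k h)"
    by (rule sum_swap_cond) auto
  also have "\<dots> = (\<Sum>k\<in>{l..j}. \<Sum>h\<in>{l..k}. g k h)"
    by (intro sum.cong refl) (auto intro: order.trans)
  finally show ?thesis .
qed

definition src :: "skein \<Rightarrow> skein" where "src Y = (case Y of UP \<Rightarrow> UP | RI \<Rightarrow> OP | OP \<Rightarrow> RI)"
definition cT :: "skein \<Rightarrow> nat \<Rightarrow> nat \<Rightarrow> nat \<Rightarrow> coef" where
  "cT Y j k h = (case Y of UP \<Rightarrow> qmon (int h - int j) 0 (int k ^ 2)
     | RI \<Rightarrow> qmon (int h) (int k) (int k ^ 2 - 2 * int j * int k)
     | OP \<Rightarrow> qmon (int h) (int h) (int k ^ 2 - 2 * int j * int h))"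

definition srcR :: "skein \<Rightarrow> skein" where "srcR Y = (case Y of UP \<Rightarrow> OP | RI \<Rightarrow> RI | OP \<Rightarrow> UP)"
definition cR :: "skein \<Rightarrow> nat \<Rightarrow> nat \<Rightarrow> nat \<Rightarrow> coef" where
  "cR Y j k h = (case Y of OP \<Rightarrow> qmon (int h - int j) (int h - int j) (- 2 * int k * int h + int k ^ 2 + int j ^ 2)
     | UP \<Rightarrow> qmon (int h - int j) (int k - int j) (2 * int h * (int j - int k) + (int k - int j) ^ 2)
     | RI \<Rightarrow> qmon (int h) 0 (int h * (2 * int j - 2 * int k) + int k ^ 2 - int j ^ 2))"

lemma Ttil_gen: "Ttil F Y j h = (if h \<le> j then (\<Sum>k\<le>h. F (src Y) j k * (cT Y j k h * qbin (j-k) (h-k))) else 0)"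
proof (cases "h \<le> j")
  case True
  have "Ttil F Y j h = qbin j h * (\<Sum>k\<le>h. F (src Y) j k / qbin j k * (cT Y j k h * qbin h k))"
    using True by (cases Y) (simp_all add: Ttil_def rho_def rho_inv_def Top_def src_def cT_def qmon_def)
  also have "\<dots> = (\<Sum>k\<le>h. F (src Y) j k * (cT Y j k h * qbin (j-k) (h-k)))"
    unfolding sum_distrib_left
  proof (rule sum.cong[OF refl])
    fix k assume "k \<in> {..h}"
    then have "qbin j h * qbin h k / qbin j k = qbin (j-k) (h-k)" using True by (simp add: qbin_a)
    then show "qbin j h * (F (src Y) j k / qbin j k * (cT Y j k h * qbin h k)) = F (src Y) j k * (cT Y j k h * qbin (j-k) (h-k))"
      by (simp add: field_simps)
  qed
  finally show ?thesis using True by simp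
qed (simp add: Ttil_def rho_def Top_def)

lemma Rtil_gen: "Rtil F Y j h = (if h \<le> j then (\<Sum>k\<in>{h..j}. F (srcR Y) j k * (cR Y j k h * qbin k h)) else 0)"
proof (cases "h \<le> j")
  case True
  have "Rtil F Y j h = qbin j h * (\<Sum>k\<in>{h..j}. F (srcR Y) j k / qbin j k * (cR Y j k h * qbin (j-h) (k-h)))"
    using True by (cases Y) (simp_all add: Rtil_def rho_def rho_inv_def Rop_def srcR_def cR_def qmon_def)
  also have "\<dots> = (\<Sum>k\<in>{h..j}. F (srcR Y) j k * (cR Y j k h * qbin k h))"
    unfolding sum_distrib_left
  proof (rule sum.cong[OF refl])
    fix k assume "k \<in> {h..j}"
    then have "qbin j h * qbin (j-h) (k-h) / qbin j k = qbin k h" using True by (simp add: qbin_b)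
    then show "qbin j h * (F (srcR Y) j k / qbin j k * (cR Y j k h * qbin (j-h) (k-h))) = F (srcR Y) j k * (cR Y j k h * qbin k h)"
      by (simp add: field_simps)
  qed
  finally show ?thesis using True by simp
qed (simp add: Rtil_def rho_def Rop_def)

lemma TT_gen: "l \<le> j \<Longrightarrow> Ttil (Ttil F) Y j l = (\<Sum>k\<le>l. F (src (src Y)) j k *
   (\<Sum>h\<in>{k..l}. cT (src Y) j k h * cT Y j h l * (qbin (j-k) (h-k) * qbin (j-h) (l-h))))"
proof -
  assume l: "l \<le> j"
  have "Ttil (Ttil F) Y j l = (\<Sum>h\<le>l. (\<Sum>k\<le>h. F (src (src Y)) j k * (cT (src Y) j k h * qbin (j-k) (h-k))) * (cT Y j h l * qbin (j-h) (l-h)))"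
    using l by (simp add: Ttil_gen[of "Ttil F"] Ttil_gen[of F])
  also have "\<dots> = (\<Sum>h\<le>l. \<Sum>k\<le>h. F (src (src Y)) j k * (cT (src Y) j k h * cT Y j h l * (qbin (j-k) (h-k) * qbin (j-h) (l-h))))"
    by (simp add: sum_distrib_right sum_distrib_left mult_ac)
  also have "\<dots> = (\<Sum>k\<le>l. \<Sum>h\<in>{k..l}. F (src (src Y)) j k * (cT (src Y) j k h * cT Y j h l * (qbin (j-k) (h-k) * qbin (j-h) (l-h))))"
    by (rule swapT)
  finally show ?thesis by (simp add: sum_distrib_left)
qed

lemma TT_gt: "j < l \<Longrightarrow> Ttil (Ttil F) Y j l = 0"
  by (simp add: Ttil_gen[of "Ttil F"])

lemma TT_zero: "(\<And>j k. F (src (src Y)) j k = 0) \<Longrightarrow> Ttil (Ttil F) Y j l = 0"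
  by (cases "l \<le> j") (simp_all add: TT_gen TT_gt)

lemma RR_gen: "l \<le> j \<Longrightarrow> Rtil (Rtil F) Y j l = (\<Sum>k\<in>{l..j}. F (srcR (srcR Y)) j k *
   (\<Sum>h\<in>{l..k}. cR (srcR Y) j k h * cR Y j h l * (qbin k h * qbin h l)))"
proof -
  assume l: "l \<le> j"
  have "Rtil (Rtil F) Y j l = (\<Sum>h\<in>{l..j}. (\<Sum>k\<in>{h..j}. F (srcR (srcR Y)) j k * (cR (srcR Y) j k h * qbin k h)) * (cR Y j h l * qbin h l))"
    using l by (simp add: Rtil_gen[of "Rtil F"] Rtil_gen[of F])
  also have "\<dots> = (\<Sum>h\<in>{l..j}. \<Sum>k\<in>{h..j}. F (srcR (srcR Y)) j k * (cR (srcR Y) j k h * cR Y j h l * (qbin k h * qbin h l)))"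
    by (simp add: sum_distrib_right sum_distrib_left mult_ac)
  also have "\<dots> = (\<Sum>k\<in>{l..j}. \<Sum>h\<in>{l..k}. F (srcR (srcR Y)) j k * (cR (srcR Y) j k h * cR Y j h l * (qbin k h * qbin h l)))"
    by (rule swapR)
  finally show ?thesis by (simp add: sum_distrib_left)
qed

lemma RR_gt: "j < l \<Longrightarrow> Rtil (Rtil F) Y j l = 0"
  by (simp add: Rtil_gen[of "Rtil F"])

lemma RR_zero: "(\<And>j k. F (srcR (srcR Y)) j k = 0) \<Longrightarrow> Rtil (Rtil F) Y j l = 0"
  by (cases "l \<le> j") (simp_all add: RR_gen RR_gt)




lemma qmon_cong: "a = a' \<Longrightarrow> b = b' \<Longrightarrow> c = c' \<Longrightarrow> qmon a b c = qmon a' b' c'" by simp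

lemma innerT: "k \<le> l \<Longrightarrow> (\<Sum>h\<in>{k..l}. qmon (int h) 0 (int h^2) * qbin (l-k) (h-k))
   = qmon (int k) 0 (int k^2) * (qpp l / qpp k)"
proof -
  assume kl: "k \<le> l"
  have "{k..l} = {0+k..(l-k)+k}" using kl by simp
  then have "(\<Sum>h\<in>{k..l}. qmon (int h) 0 (int h^2) * qbin (l-k) (h-k))
     = (\<Sum>u\<in>{0..l-k}. qmon (int (u+k)) 0 (int (u+k)^2) * qbin (l-k) (u+k-k))"
    by (simp only: sum.shift_bounds_cl_nat_ivl)
  also have "\<dots> = (\<Sum>u\<le>l-k. qmon (int k) 0 (int k^2) * ((-qv)^u * qv^(2*u*k + u*u) * gb (l-k) u))"
  proof (rule sum.cong)
    fix u assume u: "u \<in> {..l-k}"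
    have "qmon (int (u+k)) 0 (int (u+k)^2) = qmon (int k + int u) (0+0) (int k^2 + int (2*u*k+u*u))"
      by (rule qmon_cong) (simp_all add: algebra_simps power2_eq_square)
    also have "\<dots> = qmon (int k) 0 (int k^2) * ((-qv)^u * qv^(2*u*k + u*u))"
      unfolding qmon_mult[symmetric] qmon_nat ..
    finally show "qmon (int (u+k)) 0 (int (u+k)^2) * qbin (l-k) (u+k-k) = qmon (int k) 0 (int k^2) * ((-qv)^u * qv^(2*u*k + u*u) * gb (l-k) u)"
      using u by (simp add: gb_le)
  qed (simp add: atLeast0AtMost)
  also have "\<dots> = qmon (int k) 0 (int k^2) * (qpp (k + (l-k)) / qpp k)"
    unfolding sum_distrib_left[symmetric] kersum ..
  finally show ?thesis using kl by simp
qed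

lemma innerR: "l \<le> k \<Longrightarrow> k \<le> j \<Longrightarrow> (\<Sum>h\<in>{l..k}. qmon (int h) 0 (2*int h*(int j - int k) - 2*int h*int l + int h^2) * qbin (k-l) (h-l))
   = qmon (int l) 0 (2*int l*(int j - int k) - int l^2) * (qpp (j-l) / qpp (j-k))"
proof -
  assume kl: "l \<le> k" and kj: "k \<le> j"
  define e where "e = j - k"
  have e: "int j - int k = int e" using kj by (simp add: e_def)
  have "{l..k} = {0+l..(k-l)+l}" using kl by simp
  then have "(\<Sum>h\<in>{l..k}. qmon (int h) 0 (2*int h*(int j - int k) - 2*int h*int l + int h^2) * qbin (k-l) (h-l))
     = (\<Sum>u\<in>{0..k-l}. qmon (int (u+l)) 0 (2*int (u+l)*int e - 2*int (u+l)*int l + int (u+l)^2) * qbin (k-l) (u+l-l))"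
    unfolding e by (simp only: sum.shift_bounds_cl_nat_ivl)
  also have "\<dots> = (\<Sum>u\<le>k-l. qmon (int l) 0 (2*int l*int e - int l^2) * ((-qv)^u * qv^(2*u*e + u*u) * gb (k-l) u))"
  proof (rule sum.cong)
    fix u assume u: "u \<in> {..k-l}"
    have "qmon (int (u+l)) 0 (2*int (u+l)*int e - 2*int (u+l)*int l + int (u+l)^2) = qmon (int l + int u) (0+0) ((2*int l*int e - int l^2) + int (2*u*e+u*u))"
      by (rule qmon_cong) (simp_all add: algebra_simps power2_eq_square)
    also have "\<dots> = qmon (int l) 0 (2*int l*int e - int l^2) * ((-qv)^u * qv^(2*u*e + u*u))"
      unfolding qmon_mult[symmetric] qmon_nat ..
    finally show "qmon (int (u+l)) 0 (2*int (u+l)*int e - 2*int (u+l)*int l + int (u+l)^2) * qbin (k-l) (u+l-l) = qmon (int l) 0 (2*int l*int e - int l^2) * ((-qv)^u * qv^(2*u*e + u*u) * gb (k-l) u)"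
      using u by (simp add: gb_le)
  qed (simp add: atLeast0AtMost)
  also have "\<dots> = qmon (int l) 0 (2*int l*int e - int l^2) * (qpp (e + (k-l)) / qpp e)"
    unfolding sum_distrib_left[symmetric] kersum ..
  finally show ?thesis using kl kj unfolding e by (simp add: e_def)
qed

lemma TT_UP: "l \<le> j \<Longrightarrow> Ttil (Ttil F) UP j l = (\<Sum>k\<le>l. F UP j k *
   (qmon (int l - 2*int j + int k) 0 (2*int k^2) * qbin (j-k) (l-k) * (qpp l / qpp k)))"
proof -
  assume lj: "l \<le> j"
  show ?thesis unfolding TT_gen[OF lj]
  proof (rule sum.cong[OF refl])
    fix k assume k: "k \<in> {..l}"
    have "(\<Sum>h\<in>{k..l}. cT (src UP) j k h * cT UP j h l * (qbin (j-k) (h-k) * qbin (j-h) (l-h)))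
      = (\<Sum>h\<in>{k..l}. (qmon (int l - 2*int j) 0 (int k^2) * qbin (j-k) (l-k)) * (qmon (int h) 0 (int h^2) * qbin (l-k) (h-k)))"
    proof (rule sum.cong[OF refl])
      fix h assume h: "h \<in> {k..l}"
      have me: "qmon (int h - int j) 0 (int k ^ 2) * qmon (int l - int j) 0 (int h ^ 2) = qmon (int l - 2*int j) 0 (int k^2) * qmon (int h) 0 (int h^2)"
        unfolding qmon_mult by (rule qmon_cong) simp_all
      then show "cT (src UP) j k h * cT UP j h l * (qbin (j-k) (h-k) * qbin (j-h) (l-h)) = (qmon (int l - 2*int j) 0 (int k^2) * qbin (j-k) (l-k)) * (qmon (int h) 0 (int h^2) * qbin (l-k) (h-k))"
      proof -
        from h have hh: "k \<le> h" "h \<le> l" by auto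
        show ?thesis unfolding qbin_c[OF hh lj] using me by (simp add: src_def cT_def mult_ac)
      qed
    qed
    also have "\<dots> = qmon (int l - 2*int j) 0 (int k^2) * qbin (j-k) (l-k) * (qmon (int k) 0 (int k^2) * (qpp l / qpp k))"
      using k by (simp add: sum_distrib_left[symmetric] innerT)
    also have "\<dots> = qmon (int l - 2*int j + int k) 0 (2*int k^2) * qbin (j-k) (l-k) * (qpp l / qpp k)"
    proof -
      have "qmon (int l - 2*int j) 0 (int k^2) * qmon (int k) 0 (int k^2) = qmon (int l - 2*int j + int k) 0 (2*int k^2)"
        unfolding qmon_mult by (rule qmon_cong) simp_all
      then show ?thesis by (simp add: mult_ac)
    qed
    finally show "F (src (src UP)) j k * (\<Sum>h\<in>{k..l}. cT (src UP) j k h * cT UP j h l * (qbin (j-k) (h-k) * qbin (j-h) (l-h)))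
      = F UP j k * (qmon (int l - 2*int j + int k) 0 (2*int k^2) * qbin (j-k) (l-k) * (qpp l / qpp k))"
      by (simp add: src_def)
  qed
qed

lemma TT_OP: "l \<le> j \<Longrightarrow> Ttil (Ttil F) OP j l = (\<Sum>k\<le>l. F OP j k *
   (qmon (int l + int k) (int k + int l) (2*int k^2 - 2*int j*int k - 2*int j*int l) * qbin (j-k) (l-k) * (qpp l / qpp k)))"
proof -
  assume lj: "l \<le> j"
  show ?thesis unfolding TT_gen[OF lj]
  proof (rule sum.cong[OF refl])
    fix k assume k: "k \<in> {..l}"
    define M where "M = qmon (int l) (int k + int l) (int k^2 - 2*int j*int k - 2*int j*int l)"
    have "(\<Sum>h\<in>{k..l}. cT (src OP) j k h * cT OP j h l * (qbin (j-k) (h-k) * qbin (j-h) (l-h)))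
      = (\<Sum>h\<in>{k..l}. (M * qbin (j-k) (l-k)) * (qmon (int h) 0 (int h^2) * qbin (l-k) (h-k)))"
    proof (rule sum.cong[OF refl])
      fix h assume h: "h \<in> {k..l}"
      have me: "qmon (int h) (int k) (int k ^ 2 - 2 * int j * int k) * qmon (int l) (int l) (int h ^ 2 - 2 * int j * int l) = M * qmon (int h) 0 (int h^2)"
        unfolding M_def qmon_mult by (rule qmon_cong) simp_all
      then show "cT (src OP) j k h * cT OP j h l * (qbin (j-k) (h-k) * qbin (j-h) (l-h)) = (M * qbin (j-k) (l-k)) * (qmon (int h) 0 (int h^2) * qbin (l-k) (h-k))"
      proof -
        from h have hh: "k \<le> h" "h \<le> l" by auto
        show ?thesis unfolding qbin_c[OF hh lj] using me by (simp add: src_def cT_def mult_ac)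
      qed
    qed
    also have "\<dots> = M * qbin (j-k) (l-k) * (qmon (int k) 0 (int k^2) * (qpp l / qpp k))"
      using k by (simp add: sum_distrib_left[symmetric] innerT)
    also have "\<dots> = qmon (int l + int k) (int k + int l) (2*int k^2 - 2*int j*int k - 2*int j*int l) * qbin (j-k) (l-k) * (qpp l / qpp k)"
    proof -
      have "M * qmon (int k) 0 (int k^2) = qmon (int l + int k) (int k + int l) (2*int k^2 - 2*int j*int k - 2*int j*int l)"
        unfolding M_def qmon_mult by (rule qmon_cong) simp_all
      then show ?thesis by (simp add: mult_ac)
    qed
    finally show "F (src (src OP)) j k * (\<Sum>h\<in>{k..l}. cT (src OP) j k h * cT OP j h l * (qbin (j-k) (h-k) * qbin (j-h) (l-h)))
      = F OP j k * (qmon (int l + int k) (int k + int l) (2*int k^2 - 2*int j*int k - 2*int j*int l) * qbin (j-k) (l-k) * (qpp l / qpp k))"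
      by (simp add: src_def)
  qed
qed

lemma RR_OP: "l \<le> j \<Longrightarrow> Rtil (Rtil F) OP j l = (\<Sum>k\<in>{l..j}. F OP j k *
   (qmon (2*int l - 2*int j) (int k + int l - 2*int j) ((int k - int j)^2 + int j^2 + 2*int l*(int j - int k) - int l^2) * qbin k l * (qpp (j-l) / qpp (j-k))))"
proof -
  assume lj: "l \<le> j"
  show ?thesis unfolding RR_gen[OF lj]
  proof (rule sum.cong[OF refl])
    fix k assume k: "k \<in> {l..j}"
    define M where "M = qmon (int l - 2*int j) (int k + int l - 2*int j) ((int k - int j)^2 + int j^2)"
    have "(\<Sum>h\<in>{l..k}. cR (srcR OP) j k h * cR OP j h l * (qbin k h * qbin h l))
      = (\<Sum>h\<in>{l..k}. (M * qbin k l) * (qmon (int h) 0 (2*int h*(int j - int k) - 2*int h*int l + int h^2) * qbin (k-l) (h-l)))"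
    proof (rule sum.cong[OF refl])
      fix h assume h: "h \<in> {l..k}"
      have me: "qmon (int h - int j) (int k - int j) (2 * int h * (int j - int k) + (int k - int j) ^ 2) *
            qmon (int l - int j) (int l - int j) (- 2 * int h * int l + int h ^ 2 + int j ^ 2)
          = M * qmon (int h) 0 (2*int h*(int j - int k) - 2*int h*int l + int h^2)"
        unfolding M_def qmon_mult by (rule qmon_cong) (simp_all add: algebra_simps)
      then show "cR (srcR OP) j k h * cR OP j h l * (qbin k h * qbin h l) = (M * qbin k l) * (qmon (int h) 0 (2*int h*(int j - int k) - 2*int h*int l + int h^2) * qbin (k-l) (h-l))"
      proof -
        from h have hh: "l \<le> h" "h \<le> k" by auto
        show ?thesis unfolding qbin_d[OF hh] using me by (simp add: srcR_def cR_def mult_ac)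
      qed
    qed
    also have "\<dots> = M * qbin k l * (qmon (int l) 0 (2*int l*(int j - int k) - int l^2) * (qpp (j-l) / qpp (j-k)))"
      using k by (simp add: sum_distrib_left[symmetric] innerR)
    also have "\<dots> = qmon (2*int l - 2*int j) (int k + int l - 2*int j) ((int k - int j)^2 + int j^2 + 2*int l*(int j - int k) - int l^2) * qbin k l * (qpp (j-l) / qpp (j-k))"
    proof -
      have "M * qmon (int l) 0 (2*int l*(int j - int k) - int l^2) = qmon (2*int l - 2*int j) (int k + int l - 2*int j) ((int k - int j)^2 + int j^2 + 2*int l*(int j - int k) - int l^2)"
        unfolding M_def qmon_mult by (rule qmon_cong) simp_all
      then show ?thesis by (simp add: mult_ac)
    qed
    finally show "F (srcR (srcR OP)) j k * (\<Sum>h\<in>{l..k}. cR (srcR OP) j k h * cR OP j h l * (qbin k h * qbin h l))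
      = F OP j k * (qmon (2*int l - 2*int j) (int k + int l - 2*int j) ((int k - int j)^2 + int j^2 + 2*int l*(int j - int k) - int l^2) * qbin k l * (qpp (j-l) / qpp (j-k)))"
      by (simp add: srcR_def)
  qed
qed

lemma RR_RI: "l \<le> j \<Longrightarrow> Rtil (Rtil F) RI j l = (\<Sum>k\<in>{l..j}. F RI j k *
   (qmon (2*int l) 0 (int k^2 - 2*int j^2 + 2*int l*int j + 2*int l*(int j - int k) - int l^2) * qbin k l * (qpp (j-l) / qpp (j-k))))"
proof -
  assume lj: "l \<le> j"
  show ?thesis unfolding RR_gen[OF lj]
  proof (rule sum.cong[OF refl])
    fix k assume k: "k \<in> {l..j}"
    define M where "M = qmon (int l) 0 (int k^2 - 2*int j^2 + 2*int l*int j)"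
    have "(\<Sum>h\<in>{l..k}. cR (srcR RI) j k h * cR RI j h l * (qbin k h * qbin h l))
      = (\<Sum>h\<in>{l..k}. (M * qbin k l) * (qmon (int h) 0 (2*int h*(int j - int k) - 2*int h*int l + int h^2) * qbin (k-l) (h-l)))"
    proof (rule sum.cong[OF refl])
      fix h assume h: "h \<in> {l..k}"
      have me: "qmon (int h) 0 (int h * (2 * int j - 2 * int k) + int k ^ 2 - int j ^ 2) *
            qmon (int l) 0 (int l * (2 * int j - 2 * int h) + int h ^ 2 - int j ^ 2)
          = M * qmon (int h) 0 (2*int h*(int j - int k) - 2*int h*int l + int h^2)"
        unfolding M_def qmon_mult by (rule qmon_cong) (simp_all add: algebra_simps)
      then show "cR (srcR RI) j k h * cR RI j h l * (qbin k h * qbin h l) = (M * qbin k l) * (qmon (int h) 0 (2*int h*(int j - int k) - 2*int h*int l + int h^2) * qbin (k-l) (h-l))"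
      proof -
        from h have hh: "l \<le> h" "h \<le> k" by auto
        show ?thesis unfolding qbin_d[OF hh] using me by (simp add: srcR_def cR_def mult_ac)
      qed
    qed
    also have "\<dots> = M * qbin k l * (qmon (int l) 0 (2*int l*(int j - int k) - int l^2) * (qpp (j-l) / qpp (j-k)))"
      using k by (simp add: sum_distrib_left[symmetric] innerR)
    also have "\<dots> = qmon (2*int l) 0 (int k^2 - 2*int j^2 + 2*int l*int j + 2*int l*(int j - int k) - int l^2) * qbin k l * (qpp (j-l) / qpp (j-k))"
    proof -
      have "M * qmon (int l) 0 (2*int l*(int j - int k) - int l^2) = qmon (2*int l) 0 (int k^2 - 2*int j^2 + 2*int l*int j + 2*int l*(int j - int k) - int l^2)"
        unfolding M_def qmon_mult by (rule qmon_cong) simp_all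
      then show ?thesis by (simp add: mult_ac)
    qed
    finally show "F (srcR (srcR RI)) j k * (\<Sum>h\<in>{l..k}. cR (srcR RI) j k h * cR RI j h l * (qbin k h * qbin h l))
      = F RI j k * (qmon (2*int l) 0 (int k^2 - 2*int j^2 + 2*int l*int j + 2*int l*(int j - int k) - int l^2) * qbin k l * (qpp (j-l) / qpp (j-k)))"
      by (simp add: srcR_def)
  qed
qed




lemma finite_bfun: "finite {f::nat\<Rightarrow>nat. (\<forall>i\<ge>b. f i = 0) \<and> (\<forall>i<b. f i \<le> M)}"
proof (rule inj_on_finite[where f = "\<lambda>f. map f [0..<b]"])
  show "inj_on (\<lambda>f. map f [0..<b]) {f::nat\<Rightarrow>nat. (\<forall>i\<ge>b. f i = 0) \<and> (\<forall>i<b. f i \<le> M)}"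
  proof (rule inj_onI)
    fix f g assume f: "f \<in> {f::nat\<Rightarrow>nat. (\<forall>i\<ge>b. f i = 0) \<and> (\<forall>i<b. f i \<le> M)}"
      and g: "g \<in> {f::nat\<Rightarrow>nat. (\<forall>i\<ge>b. f i = 0) \<and> (\<forall>i<b. f i \<le> M)}"
      and e: "map f [0..<b] = map g [0..<b]"
    show "f = g"
    proof
      fix i show "f i = g i"
      proof (cases "i < b")
        case True then show ?thesis using e by (simp add: map_eq_conv)
      next
        case False then show ?thesis using f g by simp
      qed
    qed
  qed
  show "(\<lambda>f. map f [0..<b]) ` {f::nat\<Rightarrow>nat. (\<forall>i\<ge>b. f i = 0) \<and> (\<forall>i<b. f i \<le> M)} \<subseteq> {xs. set xs \<subseteq> {..M} \<and> length xs = b}"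
    by auto
  show "finite {xs. set xs \<subseteq> {..M} \<and> length xs = b}" by (rule finite_lists_length_eq) simp
qed

definition AU :: "nat \<Rightarrow> nat \<Rightarrow> (nat \<Rightarrow> nat) set" where
  "AU M j = {d. (\<forall>i\<ge>M. d i = 0) \<and> (\<Sum>i<M. d i) = j}"

lemma le_sum_lt: "i < (M::nat) \<Longrightarrow> (d i :: nat) \<le> (\<Sum>i<M. d i)"
  by (rule member_le_sum) auto

lemma finite_AU[simp]: "finite (AU M j)"
proof (rule finite_subset[OF _ finite_bfun[of M j]])
  show "AU M j \<subseteq> {f. (\<forall>i\<ge>M. f i = 0) \<and> (\<forall>i<M. f i \<le> j)}"
  proof
    fix d assume "d \<in> AU M j"
    then show "d \<in> {f. (\<forall>i\<ge>M. f i = 0) \<and> (\<forall>i<M. f i \<le> j)}"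
      using le_sum_lt[of _ M d] by (auto simp: AU_def)
  qed
qed

definition Vset :: "nat \<Rightarrow> (nat \<Rightarrow> nat) \<Rightarrow> nat \<Rightarrow> (nat \<Rightarrow> nat) set" where
  "Vset b c r = {f. (\<forall>i\<ge>b. f i = 0) \<and> (\<forall>i<b. f i \<le> c i) \<and> (\<Sum>i<b. f i) = r}"

lemma finite_Vset[simp]: "finite (Vset b c r)"
proof (rule finite_subset[OF _ finite_bfun[of b r]])
  show "Vset b c r \<subseteq> {f. (\<forall>i\<ge>b. f i = 0) \<and> (\<forall>i<b. f i \<le> r)}"
  proof
    fix d assume "d \<in> Vset b c r"
    then show "d \<in> {f. (\<forall>i\<ge>b. f i = 0) \<and> (\<forall>i<b. f i \<le> r)}"
      using le_sum_lt[of _ b d] by (auto simp: Vset_def)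
  qed
qed

definition pairV :: "nat \<Rightarrow> (nat \<Rightarrow> nat) \<Rightarrow> (nat \<Rightarrow> nat) \<Rightarrow> nat" where
  "pairV b c f = (\<Sum>i<b. \<Sum>i'<b. if i < i' then (c i - f i) * f i' else 0)"

lemma pairV_Suc: "pairV (Suc b) c (g(b:=s)) = pairV b c g + (\<Sum>i<b. c i - g i) * s"
proof -
  define F where "F = (\<lambda>i i'. if i < i' then (c i - (g(b:=s)) i) * (g(b:=s)) i' else 0)"
  have a: "(\<Sum>i'<Suc b. F b i') = 0" by (intro sum.neutral) (auto simp: F_def)
  have b: "(\<Sum>i'<Suc b. F i i') = (\<Sum>i'<b. if i<i' then (c i - g i) * g i' else 0) + (c i - g i) * s"
    if i: "i < b" for i
  proof -
    have b1: "(\<Sum>i'<b. F i i') = (\<Sum>i'<b. if i<i' then (c i - g i) * g i' else 0)"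
      using i by (intro sum.cong) (auto simp: F_def)
    have b2: "F i b = (c i - g i) * s" using i by (simp add: F_def)
    show ?thesis unfolding sum.lessThan_Suc b1 b2 ..
  qed
  have "pairV (Suc b) c (g(b:=s)) = (\<Sum>i<b. \<Sum>i'<Suc b. F i i') + (\<Sum>i'<Suc b. F b i')"
    unfolding pairV_def F_def by (rule sum.lessThan_Suc)
  also have "\<dots> = (\<Sum>i<b. (\<Sum>i'<b. if i<i' then (c i - g i) * g i' else 0) + (c i - g i) * s)"
    unfolding a by (simp only: add_0_right) (rule sum.cong[OF refl], rule b, simp)
  finally show ?thesis by (simp add: pairV_def sum.distrib sum_distrib_right)
qed

lemma vandV: "(\<Sum>f\<in>Vset b c r. (\<Prod>i<b. gb (c i) (f i)) * qv^(2*pairV b c f)) = gb (\<Sum>i<b. c i) r"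
proof (induct b arbitrary: r)
  case 0
  have "Vset 0 c r = (if r = 0 then {\<lambda>_. 0} else {})" by (auto simp: Vset_def)
  then show ?case by (cases "r = 0") (auto simp: pairV_def)
next
  case (Suc b)
  define C where "C = (\<Sum>i<b. c i)"
  define T where "T = (\<lambda>b f. (\<Prod>i<b. gb (c i) (f i)) * qv^(2*pairV b c f))"
  have IH: "\<And>r. (\<Sum>f\<in>Vset b c r. T b f) = gb C r" using Suc by (simp add: T_def C_def)
  have grp: "(\<Sum>f\<in>Vset (Suc b) c r. T (Suc b) f) = (\<Sum>s\<le>r. \<Sum>f\<in>{f\<in>Vset (Suc b) c r. f b = s}. T (Suc b) f)"
  proof (rule sum.group[symmetric])
    show "(\<lambda>f. f b) ` Vset (Suc b) c r \<subseteq> {..r}"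
    proof
      fix x assume "x \<in> (\<lambda>f. f b) ` Vset (Suc b) c r"
      then obtain f where f: "f \<in> Vset (Suc b) c r" "x = f b" by auto
      have "f b \<le> (\<Sum>i<Suc b. f i)" by (rule le_sum_lt) simp
      then show "x \<in> {..r}" using f by (simp add: Vset_def)
    qed
  qed simp_all
  have fib: "(\<Sum>f\<in>{f\<in>Vset (Suc b) c r. f b = s}. T (Suc b) f) = gb (c b) s * qv^(2*(s*(C-(r-s)))) * gb C (r-s)"
    if s: "s \<le> r" for s
  proof (cases "s \<le> c b")
    case False
    have e0: "{f\<in>Vset (Suc b) c r. f b = s} = {}" using False by (auto simp: Vset_def)
    show ?thesis using False unfolding e0 by simp
  next
    case True
    have img: "{f\<in>Vset (Suc b) c r. f b = s} = (\<lambda>g. g(b:=s)) ` Vset b c (r-s)"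
    proof (intro equalityI subsetI)
      fix f assume f: "f \<in> {f\<in>Vset (Suc b) c r. f b = s}"
      have "f = (f(b:=0))(b:=s)" using f by auto
      moreover have "f(b:=0) \<in> Vset b c (r-s)"
      proof -
        have "(\<Sum>i<Suc b. f i) = r" using f by (simp add: Vset_def)
        then have "(\<Sum>i<b. f i) = r - s" using f by simp
        moreover have "(\<Sum>i<b. (f(b:=0)) i) = (\<Sum>i<b. f i)" by (rule sum.cong) auto
        ultimately show ?thesis using f by (auto simp: Vset_def)
      qed
      ultimately show "f \<in> (\<lambda>g. g(b:=s)) ` Vset b c (r-s)" by blast
    next
      fix f assume "f \<in> (\<lambda>g. g(b:=s)) ` Vset b c (r-s)"
      then obtain g where g: "g \<in> Vset b c (r-s)" "f = g(b:=s)" by auto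
      have "(\<Sum>i<b. f i) = (\<Sum>i<b. g i)" using g by (intro sum.cong) auto
      then have "(\<Sum>i<Suc b. f i) = r" using g s by (simp add: Vset_def)
      moreover have "\<forall>i\<ge>Suc b. f i = 0" using g by (simp add: Vset_def)
      moreover have "\<forall>i<Suc b. f i \<le> c i" using g True by (auto simp: Vset_def less_Suc_eq)
      ultimately show "f \<in> {f\<in>Vset (Suc b) c r. f b = s}" using g by (simp add: Vset_def)
    qed
    have inj: "inj_on (\<lambda>g. g(b:=s)) (Vset b c (r-s))"
    proof (rule inj_onI)
      fix g g' assume "g \<in> Vset b c (r-s)" "g' \<in> Vset b c (r-s)" "g(b:=s) = g'(b:=s)"
      then show "g = g'" by (auto simp: Vset_def fun_eq_iff) (metis fun_upd_other le_refl)
    qed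
    have tm: "T (Suc b) (g(b:=s)) = gb (c b) s * qv^(2*(s*(C-(r-s)))) * T b g" if g: "g \<in> Vset b c (r-s)" for g
    proof -
      have p: "(\<Prod>i<b. gb (c i) ((g(b:=s)) i)) = (\<Prod>i<b. gb (c i) (g i))" by (rule prod.cong) auto
      have "(\<Sum>i<b. c i - g i) = C - (r-s)"
        using g unfolding C_def Vset_def by (subst sum_subtractf_nat) auto
      then show ?thesis unfolding T_def pairV_Suc using p
        by (simp add: power_add power_mult algebra_simps)
    qed
    have "(\<Sum>f\<in>{f\<in>Vset (Suc b) c r. f b = s}. T (Suc b) f) = (\<Sum>g\<in>Vset b c (r-s). T (Suc b) (g(b:=s)))"
      unfolding img by (rule sum.reindex[OF inj, unfolded comp_def])
    also have "\<dots> = (\<Sum>g\<in>Vset b c (r-s). gb (c b) s * qv^(2*(s*(C-(r-s)))) * T b g)"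
      by (rule sum.cong[OF refl]) (rule tm)
    also have "\<dots> = gb (c b) s * qv^(2*(s*(C-(r-s)))) * gb C (r-s)"
      by (simp add: sum_distrib_left[symmetric] IH)
    finally show ?thesis .
  qed
  have "(\<Sum>f\<in>Vset (Suc b) c r. T (Suc b) f) = (\<Sum>s\<le>r. gb (c b) s * qv^(2*(s*(C-(r-s)))) * gb C (r-s))"
    unfolding grp by (rule sum.cong[OF refl]) (simp add: fib)
  also have "\<dots> = gb (C + c b) r" by (rule vand2)
  finally show ?case by (simp add: T_def C_def)
qed




definition mrg :: "nat \<Rightarrow> nat \<Rightarrow> nat \<Rightarrow> (nat \<Rightarrow> nat) \<Rightarrow> nat \<Rightarrow> nat" where
  "mrg N p b D i = (if i < N then D i + (if p \<le> i \<and> i < p + b then D (N + (i - p)) else 0) else 0)"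

definition pii :: "nat \<Rightarrow> nat \<Rightarrow> nat \<Rightarrow> nat" where
  "pii N p i = (if i < N then i else p + (i - N))"

definition pairD :: "nat \<Rightarrow> nat \<Rightarrow> nat \<Rightarrow> (nat \<Rightarrow> nat) \<Rightarrow> nat" where
  "pairD N p b D = (\<Sum>i<b. \<Sum>i'<b. if i < i' then D (p+i) * D (N+i') else 0)"

definition bld :: "nat \<Rightarrow> nat \<Rightarrow> nat \<Rightarrow> (nat \<Rightarrow> nat) \<Rightarrow> (nat \<Rightarrow> nat) \<Rightarrow> nat \<Rightarrow> nat" where
  "bld N p b d f x = (if x < N then d x - (if p \<le> x \<and> x < p + b then f (x - p) else 0)
     else if x < N + b then f (x - N) else 0)"

lemma sum_add_range: "(\<Sum>i<(N::nat)+b. h i) = (\<Sum>i<N. h i) + (\<Sum>i<b. (h (N+i) :: 'a::comm_monoid_add))"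
  by (induct b) (simp_all add: add.assoc)

lemma prod_add_range: "(\<Prod>i<(N::nat)+b. h i) = (\<Prod>i<N. h i) * (\<Prod>i<b. (h (N+i) :: 'a::comm_monoid_mult))"
  by (induct b) (simp_all add: mult.assoc)

lemma sum_blk: "p + b \<le> (N::nat) \<Longrightarrow> (\<Sum>i<N. h i) = (\<Sum>i\<in>{..<N}-{p..<p+b}. h i) + (\<Sum>i<b. (h (p+i) :: 'a::comm_monoid_add))"
proof -
  assume a: "p + b \<le> N"
  have "(\<Sum>i<N. h i) = (\<Sum>i\<in>{..<N}-{p..<p+b}. h i) + (\<Sum>i\<in>{p..<p+b}. h i)"
    by (rule sum.subset_diff) (use a in auto)
  moreover have "(\<Sum>i\<in>{p..<p+b}. h i) = (\<Sum>i<b. h (p+i))"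
  proof -
    have "(\<Sum>i\<in>{0+p..<b+p}. h i) = (\<Sum>i\<in>{0..<b}. h (i+p))" by (rule sum.shift_bounds_nat_ivl)
    then show ?thesis by (simp add: atLeast0LessThan add.commute)
  qed
  ultimately show ?thesis by simp
qed

lemma prod_blk: "p + b \<le> (N::nat) \<Longrightarrow> (\<Prod>i<N. h i) = (\<Prod>i\<in>{..<N}-{p..<p+b}. h i) * (\<Prod>i<b. (h (p+i) :: 'a::comm_monoid_mult))"
proof -
  assume a: "p + b \<le> N"
  have "(\<Prod>i<N. h i) = (\<Prod>i\<in>{..<N}-{p..<p+b}. h i) * (\<Prod>i\<in>{p..<p+b}. h i)"
    by (rule prod.subset_diff) (use a in auto)
  moreover have "(\<Prod>i\<in>{p..<p+b}. h i) = (\<Prod>i<b. h (p+i))"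
  proof -
    have "(\<Prod>i\<in>{0+p..<b+p}. h i) = (\<Prod>i\<in>{0..<b}. h (i+p))" by (rule prod.shift_bounds_nat_ivl)
    then show ?thesis by (simp add: atLeast0LessThan add.commute)
  qed
  ultimately show ?thesis by simp
qed

lemma lin_mrg: "p + b \<le> N \<Longrightarrow> (\<Sum>i<N. c i * of_nat (mrg N p b D i)) = (\<Sum>i<N+b. c (pii N p i) * (of_nat (D i) :: 'a::comm_semiring_1))"
proof -
  assume a: "p + b \<le> N"
  have "(\<Sum>i<N. c i * of_nat (mrg N p b D i)) = (\<Sum>i<N. c i * of_nat (D i)) + (\<Sum>i<N. if p \<le> i \<and> i < p + b then c i * of_nat (D (N + (i - p))) else 0)"
    unfolding sum.distrib[symmetric] by (rule sum.cong) (auto simp: mrg_def algebra_simps)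
  also have "(\<Sum>i<N. if p \<le> i \<and> i < p + b then c i * of_nat (D (N + (i - p))) else 0) = (\<Sum>i<b. c (p+i) * of_nat (D (N+i)))"
  proof -
    have "(\<Sum>i<N. if p \<le> i \<and> i < p + b then c i * of_nat (D (N + (i - p))) else 0)
      = (\<Sum>i\<in>{..<N}-{p..<p+b}. if p \<le> i \<and> i < p + b then c i * of_nat (D (N + (i - p))) else 0) + (\<Sum>i<b. if p \<le> p+i \<and> p+i < p + b then c (p+i) * of_nat (D (N + (p+i - p))) else 0)"
      by (rule sum_blk[OF a])
    also have "(\<Sum>i\<in>{..<N}-{p..<p+b}. if p \<le> i \<and> i < p + b then c i * of_nat (D (N + (i - p))) else 0) = 0"
      by (rule sum.neutral) auto
    also have "(\<Sum>i<b. if p \<le> p+i \<and> p+i < p + b then c (p+i) * of_nat (D (N + (p+i - p))) else 0) = (\<Sum>i<b. c (p+i) * of_nat (D (N+i)))"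
      by (rule sum.cong) auto
    finally show ?thesis by simp
  qed
  also have "(\<Sum>i<N. c i * of_nat (D i)) + (\<Sum>i<b. c (p+i) * of_nat (D (N+i))) = (\<Sum>i<N+b. c (pii N p i) * of_nat (D i))"
    unfolding sum_add_range by (simp add: pii_def)
  finally show ?thesis .
qed

lemma sum_mrg: "p + b \<le> N \<Longrightarrow> (\<Sum>i<N. mrg N p b D i) = (\<Sum>i<N+b. D i)"
  using lin_mrg[of p b N "\<lambda>_. 1::nat" D] by simp

lemma quad_mrg: "p + b \<le> N \<Longrightarrow> (\<Sum>i<N. \<Sum>l<N. int (mrg N p b D i) * Q i l * int (mrg N p b D l))
   = (\<Sum>i<N+b. \<Sum>l<N+b. int (D i) * Q (pii N p i) (pii N p l) * int (D l))"
proof -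
  assume a: "p + b \<le> N"
  have "(\<Sum>i<N. \<Sum>l<N. int (mrg N p b D i) * Q i l * int (mrg N p b D l))
     = (\<Sum>i<N. (\<Sum>l<N. Q i l * of_nat (mrg N p b D l)) * of_nat (mrg N p b D i))"
    by (simp add: sum_distrib_left sum_distrib_right mult_ac)
  also have "\<dots> = (\<Sum>i<N. (\<Sum>l<N+b. Q i (pii N p l) * of_nat (D l)) * of_nat (mrg N p b D i))"
    by (simp only: lin_mrg[OF a])
  also have "\<dots> = (\<Sum>i<N+b. (\<Sum>l<N+b. Q (pii N p i) (pii N p l) * of_nat (D l)) * of_nat (D i))"
    by (rule lin_mrg[OF a])
  also have "\<dots> = (\<Sum>i<N+b. \<Sum>l<N+b. int (D i) * Q (pii N p i) (pii N p l) * int (D l))"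
    by (simp add: sum_distrib_left sum_distrib_right mult_ac)
  finally show ?thesis .
qed




lemma gb_qpp: "k \<le> n \<Longrightarrow> gb n k = qpp n / (qpp k * qpp (n - k))"
  by (simp add: gb_def qbin_eq)

lemma mrg_blk: "i < N \<Longrightarrow> p \<le> i \<Longrightarrow> i < p + b \<Longrightarrow> mrg N p b D i = D i + D (N + (i - p))"
  by (simp add: mrg_def)

lemma bld_blk: "x < N \<Longrightarrow> p \<le> x \<Longrightarrow> x < p + b \<Longrightarrow> bld N p b d f x = d x - f (x - p)"
  by (simp add: bld_def)

lemma mrg_nblk: "i < N \<Longrightarrow> \<not> (p \<le> i \<and> i < p + b) \<Longrightarrow> mrg N p b D i = D i"
  unfolding mrg_def by auto

lemma bld_nblk: "x < N \<Longrightarrow> \<not> (p \<le> x \<and> x < p + b) \<Longrightarrow> bld N p b d f x = d x"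
proof -
  assume x: "x < N" and nb: "\<not> (p \<le> x \<and> x < p + b)"
  have "(if p \<le> x \<and> x < p + b then f (x - p) else 0) = 0" by (rule if_not_P[OF nb])
  then show ?thesis unfolding bld_def using x by simp
qed

context
  fixes N p b :: nat and d :: "nat \<Rightarrow> nat" and r :: nat and j :: nat
  assumes a: "p + b \<le> N" and d: "d \<in> AU N j"
begin

lemma bld_F1: "f \<in> Vset b (\<lambda>i. d (p+i)) r \<Longrightarrow> mrg N p b (bld N p b d f) = d"
proof
  fix x assume f: "f \<in> Vset b (\<lambda>i. d (p+i)) r"
  show "mrg N p b (bld N p b d f) x = d x"
  proof (cases "x < N")
    case True
    show ?thesis
    proof (cases "p \<le> x \<and> x < p + b")
      case True
      have fa: "\<forall>i<b. f i \<le> d (p+i)" using f by (simp add: Vset_def)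
      have "x - p < b" using True by auto
      then have "f (x - p) \<le> d (p + (x - p))" using fa by blast
      moreover have "p + (x - p) = x" using True by simp
      ultimately have le: "f (x - p) \<le> d x" by simp
      have e1: "bld N p b d f (N + (x - p)) = f (x - p)" using \<open>x - p < b\<close> by (simp add: bld_def)
      show ?thesis unfolding mrg_blk[OF \<open>x < N\<close> conjunct1[OF True] conjunct2[OF True]] e1
        bld_blk[OF \<open>x < N\<close> conjunct1[OF True] conjunct2[OF True]] using le by simp
    next
      case False show ?thesis unfolding mrg_nblk[OF \<open>x < N\<close> False] bld_nblk[OF \<open>x < N\<close> False] ..
    qed
  next
    case False then show ?thesis using d by (simp add: mrg_def AU_def)
  qed
qed

lemma bld_N: "i < b \<Longrightarrow> bld N p b d f (N + i) = f i" by (simp add: bld_def)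

lemma bld_p: "i < b \<Longrightarrow> bld N p b d f (p + i) = d (p+i) - f i" using a by (simp add: bld_def)

lemma bld_out: "x < N \<Longrightarrow> x \<notin> {p..<p+b} \<Longrightarrow> bld N p b d f x = d x" by (auto simp: bld_def)

lemma bld_F2: "f \<in> Vset b (\<lambda>i. d (p+i)) r \<Longrightarrow> bld N p b d f \<in> AU (N+b) j"
proof -
  assume f: "f \<in> Vset b (\<lambda>i. d (p+i)) r"
  have "(\<Sum>i<N+b. bld N p b d f i) = (\<Sum>i<N. mrg N p b (bld N p b d f) i)" by (rule sum_mrg[OF a, symmetric])
  also have "\<dots> = j" using bld_F1[OF f] d by (simp add: AU_def)
  finally show ?thesis by (auto simp: AU_def bld_def)
qed

lemma bld_F3: "f \<in> Vset b (\<lambda>i. d (p+i)) r \<Longrightarrow> (\<Sum>i<b. bld N p b d f (N+i)) = r"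
proof -
  assume f: "f \<in> Vset b (\<lambda>i. d (p+i)) r"
  have "(\<Sum>i<b. bld N p b d f (N+i)) = (\<Sum>i<b. f i)" by (rule sum.cong) (simp_all add: bld_N)
  then show ?thesis using f by (simp add: Vset_def)
qed

lemma bld_pair: "pairD N p b (bld N p b d f) = pairV b (\<lambda>i. d (p+i)) f"
  unfolding pairD_def pairV_def by (intro sum.cong refl) (simp add: bld_N bld_p)

lemma bld_qm: "f \<in> Vset b (\<lambda>i. d (p+i)) r \<Longrightarrow>
   qmultinom (N+b) (bld N p b d f) = qmultinom N d * (\<Prod>i<b. gb (d (p+i)) (f i))"
proof -
  assume f: "f \<in> Vset b (\<lambda>i. d (p+i)) r"
  define D where "D = bld N p b d f"
  define R where "R = (\<Prod>i\<in>{..<N}-{p..<p+b}. qpp (d i))"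
  define PC where "PC = (\<Prod>i<b. qpp (d (p+i)))"
  define PF where "PF = (\<Prod>i<b. qpp (f i))"
  define PCF where "PCF = (\<Prod>i<b. qpp (d (p+i) - f i))"
  have fle: "\<And>i. i < b \<Longrightarrow> f i \<le> d (p+i)" using f by (simp add: Vset_def)
  have sj: "(\<Sum>i<N+b. D i) = (\<Sum>i<N. d i)"
    using bld_F2[OF f] d by (simp add: D_def AU_def)
  have pD: "(\<Prod>i<N+b. qpp (D i)) = R * PCF * PF"
  proof -
    have "(\<Prod>i<N+b. qpp (D i)) = (\<Prod>i<N. qpp (D i)) * (\<Prod>i<b. qpp (D (N+i)))" by (rule prod_add_range)
    also have "(\<Prod>i<b. qpp (D (N+i))) = PF" unfolding PF_def D_def by (rule prod.cong) (simp_all add: bld_N)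
    also have "(\<Prod>i<N. qpp (D i)) = (\<Prod>i\<in>{..<N}-{p..<p+b}. qpp (D i)) * (\<Prod>i<b. qpp (D (p+i)))" by (rule prod_blk[OF a])
    also have "(\<Prod>i\<in>{..<N}-{p..<p+b}. qpp (D i)) = R" unfolding R_def D_def by (rule prod.cong) (simp_all add: bld_out)
    also have "(\<Prod>i<b. qpp (D (p+i))) = PCF" unfolding PCF_def D_def by (rule prod.cong) (simp_all add: bld_p)
    finally show ?thesis by simp
  qed
  have pd: "(\<Prod>i<N. qpp (d i)) = R * PC" unfolding R_def PC_def by (rule prod_blk[OF a])
  have pg: "(\<Prod>i<b. gb (d (p+i)) (f i)) = PC / (PF * PCF)"
  proof -
    have "(\<Prod>i<b. gb (d (p+i)) (f i)) = (\<Prod>i<b. qpp (d (p+i)) / (qpp (f i) * qpp (d (p+i) - f i)))"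
      by (rule prod.cong) (simp_all add: gb_qpp fle)
    also have "\<dots> = PC / (PF * PCF)" unfolding PC_def PF_def PCF_def by (simp add: prod_dividef prod.distrib)
    finally show ?thesis .
  qed
  have nz: "R \<noteq> 0" "PC \<noteq> 0" "PF \<noteq> 0" "PCF \<noteq> 0" unfolding R_def PC_def PF_def PCF_def by simp_all
  show ?thesis unfolding D_def[symmetric] qmultinom_def sj pD pd pg using nz by (simp add: field_simps)
qed

lemma bld_surj: "D \<in> AU (N+b) j \<Longrightarrow> mrg N p b D = d \<Longrightarrow> (\<Sum>i<b. D (N+i)) = r \<Longrightarrow>
   D \<in> bld N p b d ` Vset b (\<lambda>i. d (p+i)) r"
proof -
  assume D: "D \<in> AU (N+b) j" and m: "mrg N p b D = d" and s: "(\<Sum>i<b. D (N+i)) = r"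
  define f where "f = (\<lambda>i. if i < b then D (N+i) else 0)"
  have "f \<in> Vset b (\<lambda>i. d (p+i)) r"
  proof -
    have "\<forall>i<b. f i \<le> d (p+i)"
    proof (intro allI impI)
      fix i assume i: "i < b"
      have "d (p+i) = D (p+i) + D (N+i)" unfolding m[symmetric] using i a by (simp add: mrg_def)
      then show "f i \<le> d (p+i)" using i by (simp add: f_def)
    qed
    moreover have "(\<Sum>i<b. f i) = r" unfolding s[symmetric] f_def by (rule sum.cong) auto
    ultimately show ?thesis by (simp add: Vset_def f_def)
  qed
  moreover have "bld N p b d f = D"
  proof
    fix x
    show "bld N p b d f x = D x"
    proof (cases "x < N")
      case True
      have "d x = D x + (if p \<le> x \<and> x < p + b then D (N + (x - p)) else 0)"
        unfolding m[symmetric] using True by (simp add: mrg_def)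
      show ?thesis
      proof (cases "p \<le> x \<and> x < p + b")
        case blk: True
        have xb: "x - p < b" using blk by auto
        have dx: "d x = D x + D (N + (x - p))"
          unfolding m[symmetric] by (rule mrg_blk[OF True conjunct1[OF blk] conjunct2[OF blk]])
        have fx: "f (x - p) = D (N + (x - p))" using xb by (simp add: f_def)
        show ?thesis unfolding bld_blk[OF True conjunct1[OF blk] conjunct2[OF blk]] fx dx by simp
      next
        case False
        have dx: "d x = D x" unfolding m[symmetric] by (rule mrg_nblk[OF True False])
        show ?thesis unfolding bld_nblk[OF True False] dx ..
      qed
    next
      case False
      then show ?thesis using D by (auto simp: bld_def f_def AU_def)
    qed
  qed
  ultimately show ?thesis by blast
qed

lemma bld_inj: "inj_on (bld N p b d) (Vset b (\<lambda>i. d (p+i)) r)"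
proof (rule inj_onI)
  fix f f' assume f: "f \<in> Vset b (\<lambda>i. d (p+i)) r" and f': "f' \<in> Vset b (\<lambda>i. d (p+i)) r"
    and e: "bld N p b d f = bld N p b d f'"
  show "f = f'"
  proof
    fix i show "f i = f' i"
    proof (cases "i < b")
      case True
      then show ?thesis using e bld_N[of i f] bld_N[of i f'] by metis
    next
      case False then show ?thesis using f f' by (simp add: Vset_def)
    qed
  qed
qed

end

lemma GEN:
  assumes a: "p + b \<le> N"
  shows "(\<Sum>d\<in>AU N j. g d * qmultinom N d * gb (\<Sum>i<b. d (p+i)) (rr d))
       = (\<Sum>D\<in>{D\<in>AU (N+b) j. (\<Sum>i<b. D (N+i)) = rr (mrg N p b D)}. g (mrg N p b D) * qv^(2*pairD N p b D) * qmultinom (N+b) D)"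
proof -
  define Fs where "Fs = {D\<in>AU (N+b) j. (\<Sum>i<b. D (N+i)) = rr (mrg N p b D)}"
  define H where "H = (\<lambda>D. g (mrg N p b D) * qv^(2*pairD N p b D) * qmultinom (N+b) D)"
  have fin: "finite Fs" unfolding Fs_def by simp
  have maps: "mrg N p b ` Fs \<subseteq> AU N j"
  proof
    fix x assume "x \<in> mrg N p b ` Fs"
    then obtain D where D: "D \<in> Fs" "x = mrg N p b D" by auto
    have "(\<Sum>i<N. mrg N p b D i) = j" using D sum_mrg[OF a, of D] by (simp add: Fs_def AU_def)
    then show "x \<in> AU N j" using D by (simp add: AU_def mrg_def)
  qed
  have "(\<Sum>D\<in>Fs. H D) = (\<Sum>d\<in>AU N j. \<Sum>D\<in>{D\<in>Fs. mrg N p b D = d}. H D)"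
    by (rule sum.group[symmetric, OF fin finite_AU maps])
  also have "\<dots> = (\<Sum>d\<in>AU N j. g d * qmultinom N d * gb (\<Sum>i<b. d (p+i)) (rr d))"
  proof (rule sum.cong[OF refl])
    fix d assume d: "d \<in> AU N j"
    define V where "V = Vset b (\<lambda>i. d (p+i)) (rr d)"
    have img: "{D\<in>Fs. mrg N p b D = d} = bld N p b d ` V"
    proof (intro equalityI subsetI)
      fix D assume "D \<in> {D\<in>Fs. mrg N p b D = d}"
      then show "D \<in> bld N p b d ` V" unfolding V_def
        using bld_surj[OF a d, of D "rr d"] by (auto simp: Fs_def)
    next
      fix D assume "D \<in> bld N p b d ` V"
      then obtain f where f: "f \<in> V" "D = bld N p b d f" by auto
      show "D \<in> {D\<in>Fs. mrg N p b D = d}"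
        using f bld_F1[OF a d] bld_F2[OF a d] bld_F3[OF a d] unfolding V_def Fs_def by auto
    qed
    have "(\<Sum>D\<in>{D\<in>Fs. mrg N p b D = d}. H D) = (\<Sum>f\<in>V. H (bld N p b d f))"
      unfolding img V_def by (rule sum.reindex[OF bld_inj[OF a d], unfolded comp_def])
    also have "\<dots> = (\<Sum>f\<in>V. g d * qmultinom N d * ((\<Prod>i<b. gb (d (p+i)) (f i)) * qv^(2*pairV b (\<lambda>i. d (p+i)) f)))"
    proof (rule sum.cong[OF refl])
      fix f assume f: "f \<in> V"
      show "H (bld N p b d f) = g d * qmultinom N d * ((\<Prod>i<b. gb (d (p+i)) (f i)) * qv^(2*pairV b (\<lambda>i. d (p+i)) f))"
        unfolding H_def bld_F1[OF a d f[unfolded V_def]] bld_pair[OF a d] bld_qm[OF a d f[unfolded V_def]]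
        by (simp add: mult_ac)
    qed
    also have "\<dots> = g d * qmultinom N d * gb (\<Sum>i<b. d (p+i)) (rr d)"
      unfolding sum_distrib_left[symmetric] V_def vandV ..
    finally show "(\<Sum>D\<in>{D\<in>Fs. mrg N p b D = d}. H D) = g d * qmultinom N d * gb (\<Sum>i<b. d (p+i)) (rr d)" .
  qed
  finally show ?thesis unfolding Fs_def H_def by simp
qed




definition lin :: "nat \<Rightarrow> (nat \<Rightarrow> int) \<Rightarrow> (nat \<Rightarrow> nat) \<Rightarrow> int" where
  "lin M c D = (\<Sum>i<M. c i * int (D i))"
definition quad :: "nat \<Rightarrow> (nat \<Rightarrow> nat \<Rightarrow> int) \<Rightarrow> (nat \<Rightarrow> nat) \<Rightarrow> int" where
  "quad M Q D = (\<Sum>i<M. \<Sum>l<M. int (D i) * Q i l * int (D l))"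

lemma lin_add: "lin M (\<lambda>i. c1 i + c2 i) D = lin M c1 D + lin M c2 D"
  unfolding lin_def by (simp add: sum.distrib algebra_simps)
lemma lin_diff: "lin M (\<lambda>i. c1 i - c2 i) D = lin M c1 D - lin M c2 D"
  unfolding lin_def by (simp add: sum_subtractf algebra_simps)
lemma lin_smult: "lin M (\<lambda>i. z * c i) D = z * lin M c D"
  unfolding lin_def by (simp add: sum_distrib_left algebra_simps)
lemma quad_add: "quad M (\<lambda>x y. Q1 x y + Q2 x y) D = quad M Q1 D + quad M Q2 D"
  unfolding quad_def by (simp add: sum.distrib algebra_simps)
lemma quad_diff: "quad M (\<lambda>x y. Q1 x y - Q2 x y) D = quad M Q1 D - quad M Q2 D"
  unfolding quad_def by (simp add: sum_subtractf algebra_simps)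
lemma quad_smult: "quad M (\<lambda>x y. z * Q x y) D = z * quad M Q D"
  unfolding quad_def by (simp add: sum_distrib_left algebra_simps)
lemma quad_prod: "quad M (\<lambda>x y. c x * c' y) D = lin M c D * lin M c' D"
  unfolding quad_def lin_def by (simp add: sum_product algebra_simps)

lemma lin_ind: "M \<le> T \<Longrightarrow> lin T (\<lambda>i. if i < M then 1 else 0) D = int (\<Sum>i<M. D i)"
proof -
  assume "M \<le> T"
  then obtain e where T: "T = M + e" using le_Suc_ex by blast
  have "lin T (\<lambda>i. if i < M then 1 else 0) D = (\<Sum>i<M. int (D i)) + (\<Sum>i<e. (if M + i < M then 1 else 0) * int (D (M+i)))"
    unfolding lin_def T sum_add_range by simp
  then show ?thesis by simp
qed

lemma lin_one: "lin T (\<lambda>i. 1) D = int (\<Sum>i<T. D i)" unfolding lin_def by simp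

lemma lin_mrgI: "p + b \<le> N \<Longrightarrow> lin N c (mrg N p b D) = lin (N+b) (\<lambda>i. c (pii N p i)) D"
  unfolding lin_def by (rule lin_mrg)

lemma quad_mrgI: "p + b \<le> N \<Longrightarrow> quad N Q (mrg N p b D) = quad (N+b) (\<lambda>x y. Q (pii N p x) (pii N p y)) D"
  unfolding quad_def by (rule quad_mrg)

definition Pm :: "nat \<Rightarrow> nat \<Rightarrow> nat \<Rightarrow> nat \<Rightarrow> nat \<Rightarrow> int" where
  "Pm N p b x y = (if p \<le> x \<and> x < p + b \<and> N \<le> y \<and> y < N + b \<and> x - p < y - N then 1 else 0)
     + (if p \<le> y \<and> y < p + b \<and> N \<le> x \<and> x < N + b \<and> y - p < x - N then 1 else 0)"

lemma sel: "p + b \<le> (M::nat) \<Longrightarrow> (\<Sum>x<M. if p \<le> x \<and> x < p + b then h x else (0::int)) = (\<Sum>i<b. h (p+i))"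
proof -
  assume a: "p + b \<le> M"
  have "(\<Sum>x<M. if p \<le> x \<and> x < p + b then h x else (0::int)) =
     (\<Sum>x\<in>{..<M}-{p..<p+b}. if p \<le> x \<and> x < p + b then h x else 0) + (\<Sum>i<b. if p \<le> p+i \<and> p+i < p + b then h (p+i) else 0)"
    by (rule sum_blk[OF a])
  also have "(\<Sum>x\<in>{..<M}-{p..<p+b}. if p \<le> x \<and> x < p + b then h x else 0) = 0" by (rule sum.neutral) auto
  also have "(\<Sum>i<b. if p \<le> p+i \<and> p+i < p + b then h (p+i) else 0) = (\<Sum>i<b. h (p+i))" by (rule sum.cong) auto
  finally show ?thesis by simp
qed

lemma quad_transp: "quad M (\<lambda>x y. Q y x) D = quad M Q D"
  unfolding quad_def by (subst sum.swap) (simp add: mult_ac)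

lemma quad_Pm: "p + b \<le> N \<Longrightarrow> quad (N+b) (Pm N p b) D = 2 * int (pairD N p b D)"
proof -
  assume a: "p + b \<le> N"
  define P1 where "P1 = (\<lambda>x y. if p \<le> x \<and> x < p + b \<and> N \<le> y \<and> y < N + b \<and> x - p < y - N then 1 else (0::int))"
  have Pm: "Pm N p b = (\<lambda>x y. P1 x y + P1 y x)" unfolding Pm_def P1_def by (intro ext) simp
  have "quad (N+b) P1 D = (\<Sum>x<N+b. if p \<le> x \<and> x < p + b then
       (\<Sum>y<N+b. if N \<le> y \<and> y < N + b then (if x - p < y - N then int (D x) * int (D y) else 0) else 0) else 0)"
    unfolding quad_def P1_def by (auto intro!: sum.cong)
  also have "\<dots> = (\<Sum>i<b. (\<Sum>y<N+b. if N \<le> y \<and> y < N + b then (if (p+i) - p < y - N then int (D (p+i)) * int (D y) else 0) else 0))"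
    by (rule sel) (use a in simp)
  also have "\<dots> = (\<Sum>i<b. \<Sum>i'<b. if (p+i) - p < (N+i') - N then int (D (p+i)) * int (D (N+i')) else 0)"
    by (rule sum.cong[OF refl], rule sel) simp
  also have "\<dots> = int (pairD N p b D)" unfolding pairD_def by (simp add: of_nat_sum, intro sum.cong refl, simp)
  finally have 1: "quad (N+b) P1 D = int (pairD N p b D)" .
  have 2: "quad (N+b) (\<lambda>x y. P1 y x) D = quad (N+b) P1 D" by (rule quad_transp)
  show ?thesis unfolding Pm quad_add 2 1 by simp
qed

lemma symQ_Pm: "symQ M (Pm N p b)" unfolding symQ_def Pm_def by auto

lemma qv_pow_mono: "qv ^ n = qmon 0 0 (int n)" unfolding qmon_def by simp

lemma pii_lt: "p + b \<le> N \<Longrightarrow> i < N + b \<Longrightarrow> pii N p i < N" unfolding pii_def by auto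




lemma src_src[simp]: "src (src Y) = Y" by (cases Y) (simp_all add: src_def)
lemma srcR_srcR[simp]: "srcR (srcR Y) = Y" by (cases Y) (simp_all add: srcR_def)

lemma aqf_alt: "aqf X m n S A Q K Y j k = (if Y = X then
   (\<Sum>d\<in>{d. (\<forall>i\<ge>m+n. d i = 0) \<and> (\<Sum>i<m+n. d i) = j \<and> (\<Sum>i<m. d i) = k}.
      qmon (lin (m+n) S d) (lin (m+n) A d) (quad (m+n) Q d) * qpp (\<Sum>i<m+n. if K i then d i else 0) * qmultinom (m+n) d)
   else 0)"
  unfolding aqf_def qmon_def lin_def quad_def by simp

lemma sum_prefix: "m \<le> (N::nat) \<Longrightarrow> (\<Sum>i<N. if i < m then f i else (0::nat)) = (\<Sum>i<m. f i)"
proof -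
  assume "m \<le> N"
  then obtain e where N: "N = m + e" using le_Suc_ex by blast
  show ?thesis unfolding N sum_add_range by simp
qed

lemma sum_suffix: "m \<le> (N::nat) \<Longrightarrow> (\<Sum>i<N. if m \<le> i then f i else (0::nat)) = (\<Sum>i<N. f i) - (\<Sum>i<m. f i)"
proof -
  assume "m \<le> N"
  then obtain e where N: "N = m + e" using le_Suc_ex by blast
  show ?thesis unfolding N sum_add_range by simp
qed

lemma TCASE:
  fixes X :: skein and m n :: nat and S A S' A' :: "nat \<Rightarrow> int" and Q Q' :: "nat \<Rightarrow> nat \<Rightarrow> int"
    and K :: "nat \<Rightarrow> bool" and E :: "nat \<Rightarrow> nat \<Rightarrow> nat \<Rightarrow> coef"
  assumes K: "extra_k m n K"
    and ker: "\<And>F j l. l \<le> j \<Longrightarrow> Ttil (Ttil F) X j l = (\<Sum>k\<le>l. F X j k * (E j k l * qbin (j-k) (l-k) * (qpp l / qpp k)))"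
    and adj: "\<And>D. qmon (lin (m+n+n) (\<lambda>i. S (pii (m+n) m i)) D) (lin (m+n+n) (\<lambda>i. A (pii (m+n) m i)) D)
                 (quad (m+n+n) (\<lambda>x y. Q (pii (m+n) m x) (pii (m+n) m y)) D)
        * E (\<Sum>i<m+n+n. D i) (\<Sum>i<m. mrg (m+n) m n D i) (\<Sum>i<m+n. D i) * qv^(2*pairD (m+n) m n D)
        = qmon (lin (m+n+n) S' D) (lin (m+n+n) A' D) (quad (m+n+n) Q' D)"
  shows "Ttil (Ttil (aqf X m n S A Q K)) = aqf X (m+n) n S' A' Q' (\<lambda>i. i < m+n)"
proof (intro ext)
  fix Y j l
  define N where "N = m + n"
  define F where "F = aqf X m n S A Q K"
  define W where "W = (\<lambda>d. qmon (lin N S d) (lin N A d) (quad N Q d))"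
  define kd where "kd = (\<lambda>d::nat\<Rightarrow>nat. \<Sum>i<m. d i)"
  show "Ttil (Ttil (aqf X m n S A Q K)) Y j l = aqf X (m+n) n S' A' Q' (\<lambda>i. i < m+n) Y j l"
  proof (cases "Y = X")
    case False
    have "Ttil (Ttil (aqf X m n S A Q K)) Y j l = 0" by (rule TT_zero) (simp add: aqf_def False)
    then show ?thesis by (simp add: aqf_def False)
  next
    case True
    show ?thesis
    proof (cases "l \<le> j")
      case False
      have e: "{d. (\<forall>i\<ge>m+n+n. d i = 0) \<and> (\<Sum>i<m+n+n. d i) = j \<and> (\<Sum>i<m+n. d i) = l} = {}"
        using False by (auto simp: sum_add_range)
      show ?thesis using False by (simp add: TT_gt aqf_def e)
    next
      case lj: True
      define Phi where "Phi = (\<lambda>d. W d * (E j (kd d) l * qpp l) * qmultinom N d * gb (\<Sum>i<n. d (m+i)) (j - l))"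
      have FX: "F X j k = (\<Sum>d\<in>{d\<in>AU N j. kd d = k}. W d * qpp k * qmultinom N d)" for k
      proof -
        have e1: "{d. (\<forall>i\<ge>m+n. d i = 0) \<and> (\<Sum>i<m+n. d i) = j \<and> (\<Sum>i<m. d i) = k} = {d\<in>AU N j. kd d = k}"
          by (auto simp: AU_def N_def kd_def)
        have e2: "(\<Sum>i<m+n. if K i then d i else 0) = kd d" for d
        proof -
          have "(\<Sum>i<m+n. if K i then d i else 0) = (\<Sum>i<m+n. if i < m then d i else 0)"
            using K by (intro sum.cong refl) (simp add: extra_k_def)
          then show ?thesis by (simp add: sum_prefix kd_def)
        qed
        show ?thesis unfolding F_def aqf_alt e1 e2 by (auto simp: W_def N_def intro!: sum.cong)
      qed
      have split_d: "(\<Sum>i<n. d (m+i)) = j - kd d" if "d \<in> AU N j" for d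
        using that unfolding AU_def N_def kd_def by (auto simp: sum_add_range)
      have kdle: "kd d \<le> j" if "d \<in> AU N j" for d
        using that unfolding AU_def N_def kd_def by (simp add: sum_add_range)
      have "Ttil (Ttil F) X j l = (\<Sum>k\<le>l. F X j k * (E j k l * qbin (j-k) (l-k) * (qpp l / qpp k)))"
        by (rule ker[OF lj])
      also have "\<dots> = (\<Sum>k\<le>l. \<Sum>d\<in>{d\<in>AU N j. kd d = k}. Phi d)"
      proof (rule sum.cong[OF refl])
        fix k assume k: "k \<in> {..l}"
        show "F X j k * (E j k l * qbin (j-k) (l-k) * (qpp l / qpp k)) = (\<Sum>d\<in>{d\<in>AU N j. kd d = k}. Phi d)"
          unfolding FX sum_distrib_right
        proof (rule sum.cong[OF refl])
          fix d assume d: "d \<in> {d\<in>AU N j. kd d = k}"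
          have g: "gb (\<Sum>i<n. d (m+i)) (j - l) = qbin (j-k) (l-k)"
          proof -
            have "(\<Sum>i<n. d (m+i)) = j - k" using d split_d by auto
            moreover have "qbin (j-k) ((j-k) - (l-k)) = qbin (j-k) (l-k)" using k lj by (intro qbin_sym) auto
            moreover have "(j-k) - (l-k) = j - l" using k lj by auto
            ultimately show ?thesis using k lj by (simp add: gb_le)
          qed
          show "W d * qpp k * qmultinom N d * (E j k l * qbin (j-k) (l-k) * (qpp l / qpp k)) = Phi d"
            unfolding Phi_def g using d by (simp add: field_simps)
        qed
      qed
      also have "\<dots> = (\<Sum>k\<le>j. \<Sum>d\<in>{d\<in>AU N j. kd d = k}. Phi d)"
      proof -
        have "(\<Sum>k\<le>j. \<Sum>d\<in>{d\<in>AU N j. kd d = k}. Phi d) = (\<Sum>k\<le>l. \<Sum>d\<in>{d\<in>AU N j. kd d = k}. Phi d)"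
        proof (rule sum.mono_neutral_right)
          show "\<forall>k\<in>{..j} - {..l}. (\<Sum>d\<in>{d\<in>AU N j. kd d = k}. Phi d) = 0"
          proof
            fix k assume k: "k \<in> {..j} - {..l}"
            show "(\<Sum>d\<in>{d\<in>AU N j. kd d = k}. Phi d) = 0"
            proof (rule sum.neutral, rule ballI)
              fix d assume d: "d \<in> {d\<in>AU N j. kd d = k}"
              have dA: "d \<in> AU N j" and dk: "kd d = k" using d by auto
              have "(\<Sum>i<n. d (m+i)) < j - l" using k split_d[OF dA] kdle[OF dA] dk by auto
              then show "Phi d = 0" unfolding Phi_def by simp
            qed
          qed
        qed (use lj in auto)
        then show ?thesis by simp
      qed
      also have "\<dots> = (\<Sum>d\<in>AU N j. Phi d)"
        by (rule sum.group) (auto simp: kdle)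
      also have "\<dots> = (\<Sum>d\<in>AU N j. (W d * (E j (kd d) l * qpp l)) * qmultinom N d * gb (\<Sum>i<n. d (m+i)) ((\<lambda>_. j - l) d))"
        unfolding Phi_def by (simp add: mult_ac)
      also have "\<dots> = (\<Sum>D\<in>{D\<in>AU (N+n) j. (\<Sum>i<n. D (N+i)) = j - l}.
            (W (mrg N m n D) * (E j (kd (mrg N m n D)) l * qpp l)) * qv^(2*pairD N m n D) * qmultinom (N+n) D)"
        by (rule GEN) (simp add: N_def)
      also have "\<dots> = aqf X (m+n) n S' A' Q' (\<lambda>i. i < m+n) Y j l"
      proof -
        have setE: "{D\<in>AU (N+n) j. (\<Sum>i<n. D (N+i)) = j - l} = {d. (\<forall>i\<ge>m+n+n. d i = 0) \<and> (\<Sum>i<m+n+n. d i) = j \<and> (\<Sum>i<m+n. d i) = l}"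
          using lj by (auto simp: AU_def N_def sum_add_range)
        show ?thesis unfolding aqf_alt setE using True
        proof (simp, intro sum.cong refl)
          fix D assume D: "D \<in> {d. (\<forall>i\<ge>m+n+n. d i = 0) \<and> (\<Sum>i<m+n+n. d i) = j \<and> (\<Sum>i<m+n. d i) = l}"
          have Wm: "W (mrg N m n D) = qmon (lin (m+n+n) (\<lambda>i. S (pii (m+n) m i)) D) (lin (m+n+n) (\<lambda>i. A (pii (m+n) m i)) D)
                 (quad (m+n+n) (\<lambda>x y. Q (pii (m+n) m x) (pii (m+n) m y)) D)"
            unfolding W_def N_def by (simp add: lin_mrgI quad_mrgI)
          have qk: "(\<Sum>i<m+n+n. if i < m+n then D i else 0) = l" using D by (simp add: sum_prefix)
          have ad: "W (mrg N m n D) * E j (kd (mrg N m n D)) l * qv^(2*pairD N m n D) = qmon (lin (m+n+n) S' D) (lin (m+n+n) A' D) (quad (m+n+n) Q' D)"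
            unfolding Wm using adj[of D] D by (simp add: N_def kd_def)
          show "W (mrg N m n D) * (E j (kd (mrg N m n D)) l * qpp l) * qv ^ (2 * pairD N m n D) * qmultinom (N + n) D =
                qmon (lin (m+n+n) S' D) (lin (m+n+n) A' D) (quad (m+n+n) Q' D) * qpp (\<Sum>i<m+n+n. if i < m+n then D i else 0) * qmultinom (m+n+n) D"
            unfolding qk ad[symmetric] by (simp add: N_def mult_ac)
        qed
      qed
      finally show ?thesis unfolding F_def True .
    qed
  qed
qed

lemma sum_mrg0: "m \<le> N \<Longrightarrow> (\<Sum>i<m. mrg N 0 m D i) = (\<Sum>i<m. D i) + (\<Sum>i<m. D (N+i))"
proof -
  assume a: "m \<le> N"
  have "(\<Sum>i<m. mrg N 0 m D i) = (\<Sum>i<m. D i + D (N+i))"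
    by (rule sum.cong[OF refl]) (use a in \<open>simp add: mrg_def\<close>)
  then show ?thesis by (simp add: sum.distrib)
qed

lemma RCASE:
  fixes X :: skein and m n :: nat and S A S' A' :: "nat \<Rightarrow> int" and Q Q' :: "nat \<Rightarrow> nat \<Rightarrow> int"
    and K :: "nat \<Rightarrow> bool" and E :: "nat \<Rightarrow> nat \<Rightarrow> nat \<Rightarrow> coef"
  assumes K: "extra_jk m n K"
    and ker: "\<And>F j l. l \<le> j \<Longrightarrow> Rtil (Rtil F) X j l = (\<Sum>k\<in>{l..j}. F X j k * (E j k l * qbin k l * (qpp (j-l) / qpp (j-k))))"
    and adj: "\<And>D. qmon (lin (m+(m+n)) (\<lambda>i. S (pii (m+n) 0 i)) D) (lin (m+(m+n)) (\<lambda>i. A (pii (m+n) 0 i)) D)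
                 (quad (m+(m+n)) (\<lambda>x y. Q (pii (m+n) 0 x) (pii (m+n) 0 y)) D)
        * E (\<Sum>i<m+(m+n). D i) (\<Sum>i<m. mrg (m+n) 0 m D i) (\<Sum>i<m. D i) * qv^(2*pairD (m+n) 0 m D)
        = qmon (lin (m+(m+n)) S' D) (lin (m+(m+n)) A' D) (quad (m+(m+n)) Q' D)"
  shows "Rtil (Rtil (aqf X m n S A Q K)) = aqf X m (m+n) S' A' Q' (\<lambda>i. m \<le> i)"
proof (intro ext)
  fix Y j l
  define N where "N = m + n"
  have MM: "N + m = m + (m+n)" by (simp add: N_def)
  define F where "F = aqf X m n S A Q K"
  define W where "W = (\<lambda>d. qmon (lin N S d) (lin N A d) (quad N Q d))"
  define kd where "kd = (\<lambda>d::nat\<Rightarrow>nat. \<Sum>i<m. d i)"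
  define rr where "rr = (\<lambda>d. if l \<le> kd d then kd d - l else Suc (kd d))"
  show "Rtil (Rtil (aqf X m n S A Q K)) Y j l = aqf X m (m+n) S' A' Q' (\<lambda>i. m \<le> i) Y j l"
  proof (cases "Y = X")
    case False
    have "Rtil (Rtil (aqf X m n S A Q K)) Y j l = 0" by (rule RR_zero) (simp add: aqf_def False)
    then show ?thesis by (simp add: aqf_def False)
  next
    case True
    show ?thesis
    proof (cases "l \<le> j")
      case False
      have e: "{d. (\<forall>i\<ge>m+(m+n). d i = 0) \<and> (\<Sum>i<m+(m+n). d i) = j \<and> (\<Sum>i<m. d i) = l} = {}"
        using False by (auto simp: sum_add_range)
      show ?thesis using False by (simp add: RR_gt aqf_def e)
    next
      case lj: True
      define Phi where "Phi = (\<lambda>d. W d * (E j (kd d) l * qpp (j-l)) * qmultinom N d * gb (\<Sum>i<m. d (0+i)) (rr d))"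
      have FX: "F X j k = (\<Sum>d\<in>{d\<in>AU N j. kd d = k}. W d * qpp (j - k) * qmultinom N d)" for k
      proof -
        have e1: "{d. (\<forall>i\<ge>m+n. d i = 0) \<and> (\<Sum>i<m+n. d i) = j \<and> (\<Sum>i<m. d i) = k} = {d\<in>AU N j. kd d = k}"
          by (auto simp: AU_def N_def kd_def)
        have e2: "(\<Sum>i<m+n. if K i then d i else 0) = (\<Sum>i<m+n. d i) - kd d" for d
        proof -
          have "(\<Sum>i<m+n. if K i then d i else 0) = (\<Sum>i<m+n. if m \<le> i then d i else 0)"
            using K by (intro sum.cong refl) (simp add: extra_jk_def)
          then show ?thesis by (simp add: sum_suffix kd_def)
        qed
        show ?thesis unfolding F_def aqf_alt e1 e2 by (auto simp: W_def N_def AU_def intro!: sum.cong)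
      qed
      have kdle: "kd d \<le> j" if "d \<in> AU N j" for d
        using that unfolding AU_def N_def kd_def by (simp add: sum_add_range)
      have "Rtil (Rtil F) X j l = (\<Sum>k\<in>{l..j}. F X j k * (E j k l * qbin k l * (qpp (j-l) / qpp (j-k))))"
        by (rule ker[OF lj])
      also have "\<dots> = (\<Sum>k\<in>{l..j}. \<Sum>d\<in>{d\<in>AU N j. kd d = k}. Phi d)"
      proof (rule sum.cong[OF refl])
        fix k assume k: "k \<in> {l..j}"
        show "F X j k * (E j k l * qbin k l * (qpp (j-l) / qpp (j-k))) = (\<Sum>d\<in>{d\<in>AU N j. kd d = k}. Phi d)"
          unfolding FX sum_distrib_right
        proof (rule sum.cong[OF refl])
          fix d assume d: "d \<in> {d\<in>AU N j. kd d = k}"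
          have g: "gb (\<Sum>i<m. d (0+i)) (rr d) = qbin k l"
          proof -
            have "(\<Sum>i<m. d (0+i)) = k" using d by (simp add: kd_def)
            moreover have "rr d = k - l" using d k by (simp add: rr_def)
            moreover have "qbin k (k - l) = qbin k l" using k by (intro qbin_sym) auto
            ultimately show ?thesis using k by (simp add: gb_le)
          qed
          show "W d * qpp (j - k) * qmultinom N d * (E j k l * qbin k l * (qpp (j-l) / qpp (j-k))) = Phi d"
            unfolding Phi_def g using d by (simp add: field_simps)
        qed
      qed
      also have "\<dots> = (\<Sum>k\<le>j. \<Sum>d\<in>{d\<in>AU N j. kd d = k}. Phi d)"
      proof -
        have "(\<Sum>k\<le>j. \<Sum>d\<in>{d\<in>AU N j. kd d = k}. Phi d) = (\<Sum>k\<in>{l..j}. \<Sum>d\<in>{d\<in>AU N j. kd d = k}. Phi d)"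
        proof (rule sum.mono_neutral_right)
          show "\<forall>k\<in>{..j} - {l..j}. (\<Sum>d\<in>{d\<in>AU N j. kd d = k}. Phi d) = 0"
          proof
            fix k assume k: "k \<in> {..j} - {l..j}"
            show "(\<Sum>d\<in>{d\<in>AU N j. kd d = k}. Phi d) = 0"
            proof (rule sum.neutral, rule ballI)
              fix d assume d: "d \<in> {d\<in>AU N j. kd d = k}"
              have dk: "kd d = k" using d by auto
              have kl: "k < l" using k by auto
              have "(\<Sum>i<m. d (0+i)) < rr d" using kl dk by (simp add: rr_def kd_def)
              then show "Phi d = 0" unfolding Phi_def by simp
            qed
          qed
        qed auto
        then show ?thesis by simp
      qed
      also have "\<dots> = (\<Sum>d\<in>AU N j. Phi d)"
        by (rule sum.group) (auto simp: kdle)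
      also have "\<dots> = (\<Sum>d\<in>AU N j. (W d * (E j (kd d) l * qpp (j-l))) * qmultinom N d * gb (\<Sum>i<m. d (0+i)) (rr d))"
        unfolding Phi_def by (simp add: mult_ac)
      also have "\<dots> = (\<Sum>D\<in>{D\<in>AU (N+m) j. (\<Sum>i<m. D (N+i)) = rr (mrg N 0 m D)}.
            (W (mrg N 0 m D) * (E j (kd (mrg N 0 m D)) l * qpp (j-l))) * qv^(2*pairD N 0 m D) * qmultinom (N+m) D)"
        by (rule GEN) (simp add: N_def)
      also have "\<dots> = aqf X m (m+n) S' A' Q' (\<lambda>i. m \<le> i) Y j l"
      proof -
        have setE: "{D\<in>AU (m+(m+n)) j. (\<Sum>i<m. D (N+i)) = rr (mrg N 0 m D)} = {d. (\<forall>i\<ge>m+(m+n). d i = 0) \<and> (\<Sum>i<m+(m+n). d i) = j \<and> (\<Sum>i<m. d i) = l}"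
        proof -
          have "(\<Sum>i<m. D (N+i)) = rr (mrg N 0 m D) \<longleftrightarrow> (\<Sum>i<m. D i) = l" for D
            unfolding rr_def kd_def sum_mrg0[of m N, OF le_add1[of m n, folded N_def]] by auto
          then show ?thesis by (auto simp: AU_def)
        qed
        show ?thesis unfolding aqf_alt MM setE using True
        proof (simp, intro sum.cong refl)
          fix D assume D: "D \<in> {d. (\<forall>i\<ge>m+(m+n). d i = 0) \<and> (\<Sum>i<m+(m+n). d i) = j \<and> (\<Sum>i<m. d i) = l}"
          have Wm: "W (mrg N 0 m D) = qmon (lin (m+(m+n)) (\<lambda>i. S (pii (m+n) 0 i)) D) (lin (m+(m+n)) (\<lambda>i. A (pii (m+n) 0 i)) D)
                 (quad (m+(m+n)) (\<lambda>x y. Q (pii (m+n) 0 x) (pii (m+n) 0 y)) D)"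
            unfolding W_def MM[symmetric] by (simp add: lin_mrgI quad_mrgI N_def)
          have qk: "(\<Sum>i<m+(m+n). if m \<le> i then D i else 0) = j - l" using D by (simp add: sum_suffix)
          have ad: "W (mrg N 0 m D) * E j (kd (mrg N 0 m D)) l * qv^(2*pairD N 0 m D) = qmon (lin (m+(m+n)) S' D) (lin (m+(m+n)) A' D) (quad (m+(m+n)) Q' D)"
            unfolding Wm using adj[of D] D by (simp add: N_def kd_def)
          show "W (mrg N 0 m D) * (E j (kd (mrg N 0 m D)) l * qpp (j-l)) * qv ^ (2 * pairD N 0 m D) * qmultinom (m + (m + n)) D =
                qmon (lin (m+(m+n)) S' D) (lin (m+(m+n)) A' D) (quad (m+(m+n)) Q' D) * qpp (\<Sum>i<m+(m+n). if m \<le> i then D i else 0) * qmultinom (m+(m+n)) D"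
            unfolding qk ad[symmetric] by (simp add: mult_ac)
        qed
      qed
      finally show ?thesis unfolding F_def True .
    qed
  qed
qed




lemma symQ_pii: "symQ N Q \<Longrightarrow> p + b \<le> N \<Longrightarrow> symQ (N+b) (\<lambda>x y. Q (pii N p x) (pii N p y))"
  unfolding symQ_def using pii_lt by blast

lemma case_i:
  assumes sQ: "symQ (m+n) Q" and K: "extra_k m n K"
  shows "\<exists>S' A' Q' K'. symQ ((m+n)+n) Q' \<and> extra_k (m+n) n K' \<and>
              Ttil (Ttil (aqf UP m n S A Q K)) = aqf UP (m+n) n S' A' Q' K'"
proof -
  define cK :: "nat \<Rightarrow> int" where "cK = (\<lambda>i. if pii (m+n) m i < m then 1 else 0)"
  define cL :: "nat \<Rightarrow> int" where "cL = (\<lambda>i. if i < m+n then 1 else 0)"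
  define one :: "nat \<Rightarrow> int" where "one = (\<lambda>i. 1)"
  define Sp where "Sp = (\<lambda>i. S (pii (m+n) m i))"
  define Ap where "Ap = (\<lambda>i. A (pii (m+n) m i))"
  define Qp where "Qp = (\<lambda>x y. Q (pii (m+n) m x) (pii (m+n) m y))"
  define S' where "S' = (\<lambda>i. Sp i + (cL i + ((-2) * one i + cK i)))"
  define Q' where "Q' = (\<lambda>x y. Qp x y + (2 * (cK x * cK y) + Pm (m+n) m n x y))"
  have sym: "symQ ((m+n)+n) Q'"
  proof -
    have "symQ ((m+n)+n) Qp" unfolding Qp_def by (rule symQ_pii[OF sQ]) simp
    then show ?thesis unfolding symQ_def Q'_def Pm_def by (auto simp: mult.commute)
  qed
  have eq: "Ttil (Ttil (aqf UP m n S A Q K)) = aqf UP (m+n) n S' Ap Q' (\<lambda>i. i < m+n)"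
  proof (rule TCASE[where E = "\<lambda>j k l. qmon (int l - 2*int j + int k) 0 (2*int k^2)"])
    show "extra_k m n K" by (rule K)
    show "\<And>F j l. l \<le> j \<Longrightarrow> Ttil (Ttil F) UP j l = (\<Sum>k\<le>l. F UP j k * (qmon (int l - 2*int j + int k) 0 (2*int k^2) * qbin (j-k) (l-k) * (qpp l / qpp k)))"
      by (rule TT_UP)
    fix D
    have hJ: "int (\<Sum>i<m+n+n. D i) = lin (m+n+n) one D" unfolding one_def by (rule lin_one[symmetric])
    have hL: "int (\<Sum>i<m+n. D i) = lin (m+n+n) cL D" unfolding cL_def by (rule lin_ind[symmetric]) simp
    have hK: "int (\<Sum>i<m. mrg (m+n) m n D i) = lin (m+n+n) cK D"
    proof -
      have "int (\<Sum>i<m. mrg (m+n) m n D i) = lin (m+n) (\<lambda>i. if i < m then 1 else 0) (mrg (m+n) m n D)"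
        by (rule lin_ind[symmetric]) simp
      also have "\<dots> = lin (m+n+n) cK D" unfolding cK_def by (rule lin_mrgI) simp
      finally show ?thesis .
    qed
    have hP: "qv^(2*pairD (m+n) m n D) = qmon 0 0 (quad (m+n+n) (Pm (m+n) m n) D)"
      unfolding qv_pow_mono quad_Pm[of m n "m+n", OF order_refl] by simp
    show "qmon (lin (m+n+n) (\<lambda>i. S (pii (m+n) m i)) D) (lin (m+n+n) (\<lambda>i. A (pii (m+n) m i)) D)
            (quad (m+n+n) (\<lambda>x y. Q (pii (m+n) m x) (pii (m+n) m y)) D) *
          qmon (int (\<Sum>i<m+n. D i) - 2 * int (\<Sum>i<m+n+n. D i) + int (\<Sum>i<m. mrg (m+n) m n D i)) 0 (2 * (int (\<Sum>i<m. mrg (m+n) m n D i))\<^sup>2) *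
          qv ^ (2 * pairD (m+n) m n D) =
          qmon (lin (m+n+n) S' D) (lin (m+n+n) Ap D) (quad (m+n+n) Q' D)"
      unfolding hJ hL hK hP qmon_mult Sp_def[symmetric] Ap_def[symmetric] Qp_def[symmetric]
      unfolding S'_def Q'_def lin_add lin_smult quad_add quad_smult quad_prod
      by (rule qmon_cong) (simp_all add: algebra_simps power2_eq_square)
  qed
  show ?thesis
    by (rule exI[of _ S'], rule exI[of _ Ap], rule exI[of _ Q'], rule exI[of _ "\<lambda>i. i < m+n"])
       (simp add: sym eq extra_k_def)
qed

lemma case_ii:
  assumes sQ: "symQ (m+n) Q" and K: "extra_k m n K"
  shows "\<exists>S' A' Q' K'. symQ ((m+n)+n) Q' \<and> extra_k (m+n) n K' \<and>
              Ttil (Ttil (aqf OP m n S A Q K)) = aqf OP (m+n) n S' A' Q' K'"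
proof -
  define cK :: "nat \<Rightarrow> int" where "cK = (\<lambda>i. if pii (m+n) m i < m then 1 else 0)"
  define cL :: "nat \<Rightarrow> int" where "cL = (\<lambda>i. if i < m+n then 1 else 0)"
  define one :: "nat \<Rightarrow> int" where "one = (\<lambda>i. 1)"
  define Sp where "Sp = (\<lambda>i. S (pii (m+n) m i))"
  define Ap where "Ap = (\<lambda>i. A (pii (m+n) m i))"
  define Qp where "Qp = (\<lambda>x y. Q (pii (m+n) m x) (pii (m+n) m y))"
  define S' where "S' = (\<lambda>i. Sp i + (cL i + cK i))"
  define A' where "A' = (\<lambda>i. Ap i + (cK i + cL i))"
  define Q' where "Q' = (\<lambda>x y. Qp x y + (2 * (cK x * cK y) + ((-1) * (one x * cK y + cK x * one y)
        + ((-1) * (one x * cL y + cL x * one y) + Pm (m+n) m n x y))))"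
  have sym: "symQ ((m+n)+n) Q'"
  proof -
    have "symQ ((m+n)+n) Qp" unfolding Qp_def by (rule symQ_pii[OF sQ]) simp
    then show ?thesis unfolding symQ_def Q'_def Pm_def by (auto simp: algebra_simps)
  qed
  have eq: "Ttil (Ttil (aqf OP m n S A Q K)) = aqf OP (m+n) n S' A' Q' (\<lambda>i. i < m+n)"
  proof (rule TCASE[where E = "\<lambda>j k l. qmon (int l + int k) (int k + int l) (2*int k^2 - 2*int j*int k - 2*int j*int l)"])
    show "extra_k m n K" by (rule K)
    show "\<And>F j l. l \<le> j \<Longrightarrow> Ttil (Ttil F) OP j l = (\<Sum>k\<le>l. F OP j k * (qmon (int l + int k) (int k + int l) (2*int k^2 - 2*int j*int k - 2*int j*int l) * qbin (j-k) (l-k) * (qpp l / qpp k)))"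
      by (rule TT_OP)
    fix D
    have hJ: "int (\<Sum>i<m+n+n. D i) = lin (m+n+n) one D" unfolding one_def by (rule lin_one[symmetric])
    have hL: "int (\<Sum>i<m+n. D i) = lin (m+n+n) cL D" unfolding cL_def by (rule lin_ind[symmetric]) simp
    have hK: "int (\<Sum>i<m. mrg (m+n) m n D i) = lin (m+n+n) cK D"
    proof -
      have "int (\<Sum>i<m. mrg (m+n) m n D i) = lin (m+n) (\<lambda>i. if i < m then 1 else 0) (mrg (m+n) m n D)"
        by (rule lin_ind[symmetric]) simp
      also have "\<dots> = lin (m+n+n) cK D" unfolding cK_def by (rule lin_mrgI) simp
      finally show ?thesis .
    qed
    have hP: "qv^(2*pairD (m+n) m n D) = qmon 0 0 (quad (m+n+n) (Pm (m+n) m n) D)"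
      unfolding qv_pow_mono quad_Pm[of m n "m+n", OF order_refl] by simp
    show "qmon (lin (m+n+n) (\<lambda>i. S (pii (m+n) m i)) D) (lin (m+n+n) (\<lambda>i. A (pii (m+n) m i)) D)
            (quad (m+n+n) (\<lambda>x y. Q (pii (m+n) m x) (pii (m+n) m y)) D) *
          qmon (int (\<Sum>i<m+n. D i) + int (\<Sum>i<m. mrg (m+n) m n D i)) (int (\<Sum>i<m. mrg (m+n) m n D i) + int (\<Sum>i<m+n. D i))
            (2 * (int (\<Sum>i<m. mrg (m+n) m n D i))\<^sup>2 - 2 * int (\<Sum>i<m+n+n. D i) * int (\<Sum>i<m. mrg (m+n) m n D i) - 2 * int (\<Sum>i<m+n+n. D i) * int (\<Sum>i<m+n. D i)) *
          qv ^ (2 * pairD (m+n) m n D) =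
          qmon (lin (m+n+n) S' D) (lin (m+n+n) A' D) (quad (m+n+n) Q' D)"
      unfolding hJ hL hK hP qmon_mult Sp_def[symmetric] Ap_def[symmetric] Qp_def[symmetric]
      unfolding S'_def A'_def Q'_def lin_add lin_smult quad_add quad_smult quad_prod
      by (rule qmon_cong) (simp_all add: algebra_simps power2_eq_square)
  qed
  show ?thesis
    by (rule exI[of _ S'], rule exI[of _ A'], rule exI[of _ Q'], rule exI[of _ "\<lambda>i. i < m+n"])
       (simp add: sym eq extra_k_def)
qed

lemma case_iii:
  assumes sQ: "symQ (m+n) Q" and K: "extra_jk m n K"
  shows "\<exists>S' A' Q' K'. symQ (m+(m+n)) Q' \<and> extra_jk m (m+n) K' \<and>
              Rtil (Rtil (aqf OP m n S A Q K)) = aqf OP m (m+n) S' A' Q' K'"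
proof -
  have MM: "m+n+m = m+(m+n)" by simp
  define cK :: "nat \<Rightarrow> int" where "cK = (\<lambda>i. if pii (m+n) 0 i < m then 1 else 0)"
  define cL :: "nat \<Rightarrow> int" where "cL = (\<lambda>i. if i < m then 1 else 0)"
  define one :: "nat \<Rightarrow> int" where "one = (\<lambda>i. 1)"
  define Sp where "Sp = (\<lambda>i. S (pii (m+n) 0 i))"
  define Ap where "Ap = (\<lambda>i. A (pii (m+n) 0 i))"
  define Qp where "Qp = (\<lambda>x y. Q (pii (m+n) 0 x) (pii (m+n) 0 y))"
  define S' where "S' = (\<lambda>i. Sp i + (2 * cL i + (-2) * one i))"
  define A' where "A' = (\<lambda>i. Ap i + (cK i + (cL i + (-2) * one i)))"
  define Q' where "Q' = (\<lambda>x y. Qp x y + (cK x * cK y + ((-1) * (one x * cK y + cK x * one y) + (2 * (one x * one y)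
     + ((cL x * one y + one x * cL y) + ((-1) * (cL x * cK y + cK x * cL y) + ((-1) * (cL x * cL y) + Pm (m+n) 0 m x y)))))))"
  have sym: "symQ (m+(m+n)) Q'"
  proof -
    have "symQ ((m+n)+m) Qp" unfolding Qp_def by (rule symQ_pii[OF sQ]) simp
    then have "symQ (m+(m+n)) Qp" unfolding MM .
    then show ?thesis unfolding symQ_def Q'_def Pm_def by (auto simp: algebra_simps)
  qed
  have eq: "Rtil (Rtil (aqf OP m n S A Q K)) = aqf OP m (m+n) S' A' Q' (\<lambda>i. m \<le> i)"
  proof (rule RCASE[where E = "\<lambda>j k l. qmon (2*int l - 2*int j) (int k + int l - 2*int j) ((int k - int j)^2 + int j^2 + 2*int l*(int j - int k) - int l^2)"])
    show "extra_jk m n K" by (rule K)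
    show "\<And>F j l. l \<le> j \<Longrightarrow> Rtil (Rtil F) OP j l = (\<Sum>k\<in>{l..j}. F OP j k * (qmon (2*int l - 2*int j) (int k + int l - 2*int j) ((int k - int j)^2 + int j^2 + 2*int l*(int j - int k) - int l^2) * qbin k l * (qpp (j-l) / qpp (j-k))))"
      by (rule RR_OP)
    fix D
    have hJ: "int (\<Sum>i<m+(m+n). D i) = lin (m+(m+n)) one D" unfolding one_def by (rule lin_one[symmetric])
    have hL: "int (\<Sum>i<m. D i) = lin (m+(m+n)) cL D" unfolding cL_def by (rule lin_ind[symmetric]) simp
    have hK: "int (\<Sum>i<m. mrg (m+n) 0 m D i) = lin (m+(m+n)) cK D"
    proof -
      have "int (\<Sum>i<m. mrg (m+n) 0 m D i) = lin (m+n) (\<lambda>i. if i < m then 1 else 0) (mrg (m+n) 0 m D)"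
        by (rule lin_ind[symmetric]) simp
      also have "\<dots> = lin (m+n+m) cK D" unfolding cK_def by (rule lin_mrgI) simp
      finally show ?thesis unfolding MM .
    qed
    have hP: "qv^(2*pairD (m+n) 0 m D) = qmon 0 0 (quad (m+(m+n)) (Pm (m+n) 0 m) D)"
    proof -
      have qp: "quad (m+n+m) (Pm (m+n) 0 m) D = 2 * int (pairD (m+n) 0 m D)" by (rule quad_Pm) simp
      show ?thesis unfolding qv_pow_mono MM[symmetric] qp by simp
    qed
    have lS: "lin (m+(m+n)) (\<lambda>i. S (pii (m+n) 0 i)) D = lin (m+(m+n)) Sp D" unfolding Sp_def ..
    show "qmon (lin (m+(m+n)) (\<lambda>i. S (pii (m+n) 0 i)) D) (lin (m+(m+n)) (\<lambda>i. A (pii (m+n) 0 i)) D)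
            (quad (m+(m+n)) (\<lambda>x y. Q (pii (m+n) 0 x) (pii (m+n) 0 y)) D) *
          qmon (2 * int (\<Sum>i<m. D i) - 2 * int (\<Sum>i<m+(m+n). D i)) (int (\<Sum>i<m. mrg (m+n) 0 m D i) + int (\<Sum>i<m. D i) - 2 * int (\<Sum>i<m+(m+n). D i))
            ((int (\<Sum>i<m. mrg (m+n) 0 m D i) - int (\<Sum>i<m+(m+n). D i))\<^sup>2 + (int (\<Sum>i<m+(m+n). D i))\<^sup>2
              + 2 * int (\<Sum>i<m. D i) * (int (\<Sum>i<m+(m+n). D i) - int (\<Sum>i<m. mrg (m+n) 0 m D i)) - (int (\<Sum>i<m. D i))\<^sup>2) *
          qv ^ (2 * pairD (m+n) 0 m D) =
          qmon (lin (m+(m+n)) S' D) (lin (m+(m+n)) A' D) (quad (m+(m+n)) Q' D)"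
      unfolding hJ hL hK hP qmon_mult Sp_def[symmetric] Ap_def[symmetric] Qp_def[symmetric]
      unfolding S'_def A'_def Q'_def lin_add lin_smult quad_add quad_smult quad_prod
      by (rule qmon_cong) (simp_all add: algebra_simps power2_eq_square)
  qed
  show ?thesis
    by (rule exI[of _ S'], rule exI[of _ A'], rule exI[of _ Q'], rule exI[of _ "\<lambda>i. m \<le> i"])
       (simp add: sym eq extra_jk_def)
qed

lemma case_iv:
  assumes sQ: "symQ (m+n) Q" and K: "extra_jk m n K"
  shows "\<exists>S' A' Q' K'. symQ (m+(m+n)) Q' \<and> extra_jk m (m+n) K' \<and>
              Rtil (Rtil (aqf RI m n S A Q K)) = aqf RI m (m+n) S' A' Q' K'"
proof -
  have MM: "m+n+m = m+(m+n)" by simp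
  define cK :: "nat \<Rightarrow> int" where "cK = (\<lambda>i. if pii (m+n) 0 i < m then 1 else 0)"
  define cL :: "nat \<Rightarrow> int" where "cL = (\<lambda>i. if i < m then 1 else 0)"
  define one :: "nat \<Rightarrow> int" where "one = (\<lambda>i. 1)"
  define Sp where "Sp = (\<lambda>i. S (pii (m+n) 0 i))"
  define Ap where "Ap = (\<lambda>i. A (pii (m+n) 0 i))"
  define Qp where "Qp = (\<lambda>x y. Q (pii (m+n) 0 x) (pii (m+n) 0 y))"
  define S' where "S' = (\<lambda>i. Sp i + 2 * cL i)"
  define Q' where "Q' = (\<lambda>x y. Qp x y + (cK x * cK y + ((-2) * (one x * one y)
     + (2 * (cL x * one y + one x * cL y) + ((-1) * (cL x * cK y + cK x * cL y) + ((-1) * (cL x * cL y) + Pm (m+n) 0 m x y))))))"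
  have sym: "symQ (m+(m+n)) Q'"
  proof -
    have "symQ ((m+n)+m) Qp" unfolding Qp_def by (rule symQ_pii[OF sQ]) simp
    then have "symQ (m+(m+n)) Qp" unfolding MM .
    then show ?thesis unfolding symQ_def Q'_def Pm_def by (auto simp: algebra_simps)
  qed
  have eq: "Rtil (Rtil (aqf RI m n S A Q K)) = aqf RI m (m+n) S' Ap Q' (\<lambda>i. m \<le> i)"
  proof (rule RCASE[where E = "\<lambda>j k l. qmon (2*int l) 0 (int k^2 - 2*int j^2 + 2*int l*int j + 2*int l*(int j - int k) - int l^2)"])
    show "extra_jk m n K" by (rule K)
    show "\<And>F j l. l \<le> j \<Longrightarrow> Rtil (Rtil F) RI j l = (\<Sum>k\<in>{l..j}. F RI j k * (qmon (2*int l) 0 (int k^2 - 2*int j^2 + 2*int l*int j + 2*int l*(int j - int k) - int l^2) * qbin k l * (qpp (j-l) / qpp (j-k))))"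
      by (rule RR_RI)
    fix D
    have hJ: "int (\<Sum>i<m+(m+n). D i) = lin (m+(m+n)) one D" unfolding one_def by (rule lin_one[symmetric])
    have hL: "int (\<Sum>i<m. D i) = lin (m+(m+n)) cL D" unfolding cL_def by (rule lin_ind[symmetric]) simp
    have hK: "int (\<Sum>i<m. mrg (m+n) 0 m D i) = lin (m+(m+n)) cK D"
    proof -
      have "int (\<Sum>i<m. mrg (m+n) 0 m D i) = lin (m+n) (\<lambda>i. if i < m then 1 else 0) (mrg (m+n) 0 m D)"
        by (rule lin_ind[symmetric]) simp
      also have "\<dots> = lin (m+n+m) cK D" unfolding cK_def by (rule lin_mrgI) simp
      finally show ?thesis unfolding MM .
    qed
    have hP: "qv^(2*pairD (m+n) 0 m D) = qmon 0 0 (quad (m+(m+n)) (Pm (m+n) 0 m) D)"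
    proof -
      have qp: "quad (m+n+m) (Pm (m+n) 0 m) D = 2 * int (pairD (m+n) 0 m D)" by (rule quad_Pm) simp
      show ?thesis unfolding qv_pow_mono MM[symmetric] qp by simp
    qed
    show "qmon (lin (m+(m+n)) (\<lambda>i. S (pii (m+n) 0 i)) D) (lin (m+(m+n)) (\<lambda>i. A (pii (m+n) 0 i)) D)
            (quad (m+(m+n)) (\<lambda>x y. Q (pii (m+n) 0 x) (pii (m+n) 0 y)) D) *
          qmon (2 * int (\<Sum>i<m. D i)) 0
            ((int (\<Sum>i<m. mrg (m+n) 0 m D i))\<^sup>2 - 2 * (int (\<Sum>i<m+(m+n). D i))\<^sup>2 + 2 * int (\<Sum>i<m. D i) * int (\<Sum>i<m+(m+n). D i)
              + 2 * int (\<Sum>i<m. D i) * (int (\<Sum>i<m+(m+n). D i) - int (\<Sum>i<m. mrg (m+n) 0 m D i)) - (int (\<Sum>i<m. D i))\<^sup>2) *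
          qv ^ (2 * pairD (m+n) 0 m D) =
          qmon (lin (m+(m+n)) S' D) (lin (m+(m+n)) Ap D) (quad (m+(m+n)) Q' D)"
      unfolding hJ hL hK hP qmon_mult Sp_def[symmetric] Ap_def[symmetric] Qp_def[symmetric]
      unfolding S'_def Q'_def lin_add lin_smult quad_add quad_smult quad_prod
      by (rule qmon_cong) (simp_all add: algebra_simps power2_eq_square)
  qed
  show ?thesis
    by (rule exI[of _ S'], rule exI[of _ Ap], rule exI[of _ Q'], rule exI[of _ "\<lambda>i. m \<le> i"])
       (simp add: sym eq extra_jk_def)
qed

theorem mainTheorem10:
  fixes m n :: nat and S A :: "nat \<Rightarrow> int" and Q :: "nat \<Rightarrow> nat \<Rightarrow> int" and K :: "nat \<Rightarrow> bool"
  assumes "symQ (m+n) Q"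
  shows "(extra_k m n K \<longrightarrow>
           (\<exists>S' A' Q' K'. symQ ((m+n)+n) Q' \<and> extra_k (m+n) n K' \<and>
              Ttil (Ttil (aqf UP m n S A Q K)) = aqf UP (m+n) n S' A' Q' K'))
       \<and> (extra_k m n K \<longrightarrow>
           (\<exists>S' A' Q' K'. symQ ((m+n)+n) Q' \<and> extra_k (m+n) n K' \<and>
              Ttil (Ttil (aqf OP m n S A Q K)) = aqf OP (m+n) n S' A' Q' K'))
       \<and> (extra_jk m n K \<longrightarrow>
           (\<exists>S' A' Q' K'. symQ (m+(m+n)) Q' \<and> extra_jk m (m+n) K' \<and>
              Rtil (Rtil (aqf OP m n S A Q K)) = aqf OP m (m+n) S' A' Q' K'))
       \<and> (extra_jk m n K \<longrightarrow>
           (\<exists>S' A' Q' K'. symQ (m+(m+n)) Q' \<and> extra_jk m (m+n) K' \<and>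
              Rtil (Rtil (aqf RI m n S A Q K)) = aqf RI m (m+n) S' A' Q' K'))"
  using case_i[OF assms] case_ii[OF assms] case_iii[OF assms] case_iv[OF assms] by blast


end
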